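(* Let $\mathbbm k$ be an algebraically closed field, $n\ge1$ with $\mathrm{char}\,\mathbbm k\nmid 2n$, $a\in\mathbb Z/n$ with $a^2\equiv1\pmod n$, $m\in\mathbb Z/n$ with $(1-a)m\equiv0$, and $G=G_{n,a,m}$, acting trivially on $\mathbbm k^\times$. Let $d_\pm=\gcd(a\pm1,n)$. Then $$\mathrm H^2(G,\mathbbm k^\times)\cong\begin{cases}0&\text{if }d_-d_+=n\text{ or }G\text{ is non-split},\\ \mathbb Z/2&\text{if }d_-d_+=2n\text{ and }G\text{ is split}.\end{cases}$$ Consequently, for a stacky curve $\mathcal C$ over $\mathbbm k$, a doubly-twisted node with stabilizer $G$ contributes this group as a direct summand of $\mathrm H^2(\mathcal C,\mathbb G_m)$; in particular $\mathrm H^2([\operatorname{Spec}\mathbbm k[x,y]/(xy)\,/\,\mu_n\rtimes\mathbb Z/2],\mathbb G_m)=\mathbb Z/2$ when $d_-d_+=2n$ (e.g. $a=-1$).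
   Context: $G_{n,a,m}$ is the group generated by $t,\sigma$ with relations $t^n=1$, $\sigma t\sigma^{-1}=t^a$, $\sigma^2=t^m$ (an extension of $\mathbb Z/2$ by $\mu_n\cong\langle t\rangle$); $G$ is split if it is isomorphic to the semidirect product $\mu_n\rtimes\mathbb Z/2$ (equivalently $\gcd(a+1,n)\mid m$). The Brauer-type group of a stacky curve $\mathcal C$ (tame, proper, geometrically integral one-dimensional DM stack with trivial generic stabilizer over algebraically closed $\mathbbm k$) is $\mathrm H^2(\mathcal C,\mathbb G_m)=\bigoplus_i\mathrm H^2(G_i,\mathbbm k^\times)$ over the singular points $p_i$ of $\mathcal C_{\mathrm{red}}$ with geometric stabilizers $G_i$ acting trivially. A doubly-twisted node is a node étale locally of the form $[\operatorname{Spec}R/G]$ with $\mu_n\subset G$ acting by $(x,y)\mapsto(\zeta_nx,\zeta_n^ay)$ and elements outside $\mu_n$ interchanging the two branches of $xy=0$. *)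

theory Defs
  imports "HOL-Algebra.Algebra" "HOL-Computational_Algebra.Polynomial"
begin

definition alg_closed :: "'k::field itself \<Rightarrow> bool" where
  "alg_closed _ \<longleftrightarrow> (\<forall>p::'k poly. degree p \<ge> 1 \<longrightarrow> (\<exists>x. poly p x = 0))"

text \<open>The group G_{n,a,m}: elements (i,e) stand for t^i sigma^e, 0 \<le> i < n, e \<in> {0,1};
  multiplication t^i sigma^e t^j sigma^f = t^(i + a^e j) sigma^(e+f), with sigma^2 = t^m.\<close>
definition Gnam_mult :: "nat \<Rightarrow> int \<Rightarrow> int \<Rightarrow> int \<times> int \<Rightarrow> int \<times> int \<Rightarrow> int \<times> int" where
  "Gnam_mult n a m x y =
     ((fst x + (if snd x = 1 then a else 1) * fst y
         + (if snd x = 1 \<and> snd y = 1 then m else 0)) mod int n,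
      (snd x + snd y) mod 2)"

definition Gnam_carrier :: "nat \<Rightarrow> (int \<times> int) set" where
  "Gnam_carrier n = {0..<int n} \<times> {0, 1}"

definition Gnam :: "nat \<Rightarrow> int \<Rightarrow> int \<Rightarrow> (int \<times> int) monoid" where
  "Gnam n a m = \<lparr> carrier = Gnam_carrier n, monoid.mult = Gnam_mult n a m, one = (0, 0) \<rparr>"

text \<open>G is split iff it is isomorphic to the semidirect product mu_n \<rtimes> Z/2 = G_{n,a,0}.\<close>
definition Gnam_split :: "nat \<Rightarrow> int \<Rightarrow> int \<Rightarrow> bool" where
  "Gnam_split n a m \<longleftrightarrow> Gnam n a m \<cong> Gnam n a 0"

definition cocycles2 :: "('g, 'b) monoid_scheme \<Rightarrow> ('g \<Rightarrow> 'g \<Rightarrow> 'k::field) set" where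
  "cocycles2 G = {f. (\<forall>x\<in>carrier G. \<forall>y\<in>carrier G. f x y \<noteq> 0)
      \<and> (\<forall>x y. x \<notin> carrier G \<or> y \<notin> carrier G \<longrightarrow> f x y = 1)
      \<and> (\<forall>x\<in>carrier G. \<forall>y\<in>carrier G. \<forall>z\<in>carrier G.
           f y z * f x (y \<otimes>\<^bsub>G\<^esub> z) = f (x \<otimes>\<^bsub>G\<^esub> y) z * f x y)}"

definition coboundaries2 :: "('g, 'b) monoid_scheme \<Rightarrow> ('g \<Rightarrow> 'g \<Rightarrow> 'k::field) set" where
  "coboundaries2 G = {f. \<exists>h. (\<forall>x\<in>carrier G. h x \<noteq> 0) \<and>
      (\<forall>x y. f x y = (if x \<in> carrier G \<and> y \<in> carrier G
                      then h y * inverse (h (x \<otimes>\<^bsub>G\<^esub> y)) * h x else 1))}"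

definition cocycle_group :: "('g, 'b) monoid_scheme \<Rightarrow> ('g \<Rightarrow> 'g \<Rightarrow> 'k::field) monoid" where
  "cocycle_group G = \<lparr> carrier = cocycles2 G, monoid.mult = (\<lambda>f g x y. f x y * g x y), one = (\<lambda>x y. 1) \<rparr>"

definition H2 :: "('g, 'b) monoid_scheme \<Rightarrow> 'k::field itself \<Rightarrow> ('g \<Rightarrow> 'g \<Rightarrow> 'k) set monoid" where
  "H2 G _ = cocycle_group G Mod (coboundaries2 G :: ('g \<Rightarrow> 'g \<Rightarrow> 'k) set)"

end

theory Submission
  imports Defs
begin


lemma modL1: "((u::int) + c * (w mod q) + v) mod q = (u + c*w + v) mod q"
  by (intro mod_add_cong mod_mult_cong) simp_all
lemma modL3: "((u::int) + c * (w mod q)) mod q = (u + c*w) mod q"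
  by (intro mod_add_cong mod_mult_cong) simp_all
lemma modL6: "((w mod q) + (u::int) + v) mod q = (w + u + v) mod q"
  by (intro mod_add_cong mod_mult_cong) simp_all
lemma modL7: "((u::int) + (w mod q) * c) mod q = (u + w * c) mod q"
  by (intro mod_add_cong mod_mult_cong) simp_all
lemma modL8: "((u::int) + (w mod q) * c + v) mod q = (u + w * c + v) mod q"
  by (intro mod_add_cong mod_mult_cong) simp_all
lemma modL9: "((u::int) + c + (w mod q)) mod q = (u + c + w) mod q"
  by (intro mod_add_cong mod_mult_cong) simp_all
lemma modL5: "((u::int) + (w mod q) + v) mod q = (u + w + v) mod q"
  by (intro mod_add_cong mod_mult_cong) simp_all

lemma root_exists:
  assumes "alg_closed TYPE('k::field)" "d \<ge> 1"
  shows "\<exists>x::'k. x ^ d = c"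
proof -
  let ?p = "monom (1::'k) d + [:-c:]"
  have "degree ?p = d" using assms(2) by (subst degree_add_eq_left) (auto simp: degree_monom_eq)
  then have "1 \<le> degree ?p" using assms(2) by simp
  then have "\<exists>x. poly ?p x = 0" using assms(1) unfolding alg_closed_def by blast
  then obtain x where "poly ?p x = 0" by blast
  then show ?thesis by (auto simp: poly_monom)
qed

locale gnam =
  fixes n :: nat and a m :: int
  assumes n1: "n \<ge> 1"
    and asq: "a ^ 2 mod int n = 1 mod int n"
    and am: "((1 - a) * m) mod int n = 0"
begin

abbreviation "G \<equiv> Gnam n a m"

lemma carrG: "carrier G = {0..<int n} \<times> {0, 1}"
  by (simp add: Gnam_def Gnam_carrier_def)

lemma multG: "x \<otimes>\<^bsub>G\<^esub> y = Gnam_mult n a m x y"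
  by (simp add: Gnam_def)

lemma oneG: "\<one>\<^bsub>G\<^esub> = (0, 0)"
  by (simp add: Gnam_def)

lemma aak: "(a * (a * k)) mod int n = k mod int n"
proof -
  have "(a * (a * k)) mod int n = ((a^2 mod int n) * k) mod int n"
    by (simp add: power2_eq_square mult.assoc mod_mult_left_eq)
  also have "\<dots> = k mod int n" using asq by (simp add: mod_mult_left_eq)
  finally show ?thesis .
qed

lemma amm: "(a * m) mod int n = m mod int n"
proof -
  have "n dvd (1 - a) * m" using am by (simp add: dvd_eq_mod_eq_0)
  then have "int n dvd a * m - m" by (metis dvd_minus_iff minus_diff_eq left_diff_distrib mult_1)
  then show ?thesis by (simp add: mod_eq_dvd_iff)
qed

lemma assocG:
  assumes "x \<in> carrier G" "y \<in> carrier G" "z \<in> carrier G"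
  shows "Gnam_mult n a m (Gnam_mult n a m x y) z = Gnam_mult n a m x (Gnam_mult n a m y z)"
proof -
  obtain i e where x: "x = (i, e)" "e = 0 \<or> e = 1" using assms(1) by (cases x) (auto simp: carrG)
  obtain j f where y: "y = (j, f)" "f = 0 \<or> f = 1" using assms(2) by (cases y) (auto simp: carrG)
  obtain k g where z: "z = (k, g)" "g = 0 \<or> g = 1" using assms(3) by (cases z) (auto simp: carrG)
  have D1: "int n dvd (1-a)*m" using am by (simp add: dvd_eq_mod_eq_0)
  have D2: "int n dvd (a*a-1)" using asq by (simp add: mod_eq_dvd_iff power2_eq_square)
  have C7: "(i + a*j + m + k) mod int n = (i + a*(j + a*k) + m) mod int n"
  proof -
    have "(i + a*j + m + k) - (i + a*(j + a*k) + m) = - (k*(a*a-1))" by (simp add: algebra_simps)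
    then show ?thesis using D2 by (simp add: mod_eq_dvd_iff)
  qed
  have C8: "(i + a*j + m + k) mod int n = (i + a*(j + a*k + m)) mod int n"
  proof -
    have "(i + a*j + m + k) - (i + a*(j + a*k + m)) = (1-a)*m - k*(a*a-1)" by (simp add: algebra_simps)
    then show ?thesis using D1 D2 by (simp add: mod_eq_dvd_iff)
  qed
  have C9: "(i + (m + (a * j + a * (a * k)))) mod int n = (i + (a * j + (a * m + a * (a * k)))) mod int n"
  proof -
    have "(i + (m + (a * j + a * (a * k)))) - (i + (a * j + (a * m + a * (a * k)))) = (1-a)*m" by (simp add: algebra_simps)
    then show ?thesis using D1 by (simp add: mod_eq_dvd_iff)
  qed
  show ?thesis using x(2) y(2) z(2) unfolding x y z
    by (elim disjE; simp add: Gnam_mult_def modL1 modL3 modL5 modL6 mod_simps C7 C8; simp add: algebra_simps C9)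
qed
lemma closedG: "x \<in> carrier G \<Longrightarrow> y \<in> carrier G \<Longrightarrow> Gnam_mult n a m x y \<in> carrier G"
  using n1 by (auto simp: carrG Gnam_mult_def)

lemma groupG: "group G"
proof (rule groupI)
  fix x y assume "x \<in> carrier G" "y \<in> carrier G"
  then show "x \<otimes>\<^bsub>G\<^esub> y \<in> carrier G" by (simp add: multG closedG)
next
  show "\<one>\<^bsub>G\<^esub> \<in> carrier G" using n1 by (simp add: oneG carrG)
next
  fix x y z assume "x \<in> carrier G" "y \<in> carrier G" "z \<in> carrier G"
  then show "x \<otimes>\<^bsub>G\<^esub> y \<otimes>\<^bsub>G\<^esub> z = x \<otimes>\<^bsub>G\<^esub> (y \<otimes>\<^bsub>G\<^esub> z)"
    by (simp add: multG assocG)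
next
  fix x assume "x \<in> carrier G"
  then show "\<one>\<^bsub>G\<^esub> \<otimes>\<^bsub>G\<^esub> x = x"
    by (auto simp: multG oneG Gnam_mult_def carrG)
next
  fix x assume x: "x \<in> carrier G"
  then obtain i e where ie: "x = (i,e)" "0 \<le> i" "i < int n" "e = 0 \<or> e = 1" by (auto simp: carrG)
  show "\<exists>y\<in>carrier G. y \<otimes>\<^bsub>G\<^esub> x = \<one>\<^bsub>G\<^esub>"
  proof (cases "e = 0")
    case True
    show ?thesis
      by (rule bexI[of _ "((- i) mod int n, 0)"]) (use n1 True ie in \<open>auto simp: carrG multG oneG Gnam_mult_def mod_simps\<close>)
  next
    case False
    then have e1: "e = 1" using ie by auto
    have "((- a * i - m) mod int n + a * i + m) mod int n = 0"
      by (simp add: modL6)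
    then show ?thesis
      by (intro bexI[of _ "((- a * i - m) mod int n, 1)"]) (use n1 e1 ie in \<open>auto simp: carrG multG oneG Gnam_mult_def\<close>)
  qed
qed

definition "tt = (1 mod int n, 0::int)"
definition "ss = (0::int, 1::int)"
definition "AA = nat (a mod int n)"
definition "MM = nat (m mod int n)"

lemma tt_carr: "tt \<in> carrier G" using n1 by (simp add: tt_def carrG)
lemma ss_carr: "ss \<in> carrier G" using n1 by (simp add: ss_def carrG)

lemma tt_pow: "tt [^]\<^bsub>G\<^esub> (k::nat) = (int k mod int n, 0)"
proof (induction k)
  case 0 then show ?case by (simp add: oneG)
next
  case (Suc k)
  then show ?case by (simp add: multG tt_def Gnam_mult_def mod_simps add.commute)
qed

lemma elt_decomp: "(i,e) \<in> carrier G \<Longrightarrow> tt [^]\<^bsub>G\<^esub> nat i \<otimes>\<^bsub>G\<^esub> ss [^]\<^bsub>G\<^esub> nat e = (i, e)"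
  by (auto simp: carrG tt_pow multG Gnam_mult_def ss_def oneG)

lemma AA_int: "int AA = a mod int n" using n1 by (simp add: AA_def)
lemma MM_int: "int MM = m mod int n" using n1 by (simp add: MM_def)

end

lemma cocyclesD:
  assumes "f \<in> cocycles2 G"
  shows "\<And>x y. x \<in> carrier G \<Longrightarrow> y \<in> carrier G \<Longrightarrow> f x y \<noteq> 0"
    and "\<And>x y. x \<notin> carrier G \<or> y \<notin> carrier G \<Longrightarrow> f x y = 1"
    and "\<And>x y z. x \<in> carrier G \<Longrightarrow> y \<in> carrier G \<Longrightarrow> z \<in> carrier G \<Longrightarrow>
           f y z * f x (y \<otimes>\<^bsub>G\<^esub> z) = f (x \<otimes>\<^bsub>G\<^esub> y) z * f x y"
  using assms by (auto simp: cocycles2_def)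

lemma cocyclesI:
  assumes "\<And>x y. x \<in> carrier G \<Longrightarrow> y \<in> carrier G \<Longrightarrow> f x y \<noteq> 0"
    and "\<And>x y. x \<notin> carrier G \<or> y \<notin> carrier G \<Longrightarrow> f x y = 1"
    and "\<And>x y z. x \<in> carrier G \<Longrightarrow> y \<in> carrier G \<Longrightarrow> z \<in> carrier G \<Longrightarrow>
           f y z * f x (y \<otimes>\<^bsub>G\<^esub> z) = f (x \<otimes>\<^bsub>G\<^esub> y) z * f x y"
  shows "f \<in> cocycles2 G"
  using assms by (auto simp: cocycles2_def)

lemma (in group) cocycle_one_left:
  assumes "(f :: 'a \<Rightarrow> 'a \<Rightarrow> 'k::field) \<in> cocycles2 G" "x \<in> carrier G"
  shows "f \<one> x = f \<one> \<one>"
proof -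
  note assms = TrueI assms
  have "f \<one> x * f \<one> (\<one> \<otimes> x) = f (\<one> \<otimes> \<one>) x * f \<one> \<one>"
    using cocyclesD(3)[OF assms(2), of \<one> \<one> x] assms(3) by simp
  then have "f \<one> x * f \<one> x = f \<one> x * f \<one> \<one>" using assms(3) by simp
  moreover have "f \<one> x \<noteq> 0" using cocyclesD(1)[OF assms(2)] assms(3) by simp
  ultimately show ?thesis by simp
qed

lemma (in group) cocycle_one_right:
  assumes "(f :: 'a \<Rightarrow> 'a \<Rightarrow> 'k::field) \<in> cocycles2 G" "x \<in> carrier G"
  shows "f x \<one> = f \<one> \<one>"
proof -
  note assms = TrueI assms
  have "f \<one> \<one> * f x (\<one> \<otimes> \<one>) = f (x \<otimes> \<one>) \<one> * f x \<one>"
    using cocyclesD(3)[OF assms(2), of x \<one> \<one>] assms(3) by simp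
  then have "f \<one> \<one> * f x \<one> = f x \<one> * f x \<one>" using assms(3) by simp
  moreover have "f x \<one> \<noteq> 0" using cocyclesD(1)[OF assms(2)] assms(3) by simp
  ultimately show ?thesis by simp
qed

lemma carrier_cg: "carrier (cocycle_group G) = cocycles2 G"
  by (simp add: cocycle_group_def)
lemma mult_cg: "f \<otimes>\<^bsub>cocycle_group G\<^esub> g = (\<lambda>x y. f x y * g x y)"
  by (simp add: cocycle_group_def)
lemma one_cg: "\<one>\<^bsub>cocycle_group G\<^esub> = (\<lambda>x y. 1)"
  by (simp add: cocycle_group_def)

lemma cocycle_mult_closed:
  assumes "(f :: 'g \<Rightarrow> 'g \<Rightarrow> 'k::field) \<in> cocycles2 G" "g \<in> cocycles2 G"
  shows "(\<lambda>x y. f x y * g x y) \<in> cocycles2 G"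
proof (rule cocyclesI)
  fix x y z assume xyz: "x \<in> carrier G" "y \<in> carrier G" "z \<in> carrier G"
  have "f y z * f x (y \<otimes>\<^bsub>G\<^esub> z) = f (x \<otimes>\<^bsub>G\<^esub> y) z * f x y"
    "g y z * g x (y \<otimes>\<^bsub>G\<^esub> z) = g (x \<otimes>\<^bsub>G\<^esub> y) z * g x y"
    using cocyclesD(3)[OF assms(1) xyz] cocyclesD(3)[OF assms(2) xyz] by auto
  then show "f y z * g y z * (f x (y \<otimes>\<^bsub>G\<^esub> z) * g x (y \<otimes>\<^bsub>G\<^esub> z)) =
        f (x \<otimes>\<^bsub>G\<^esub> y) z * g (x \<otimes>\<^bsub>G\<^esub> y) z * (f x y * g x y)"
    by (metis (no_types, lifting) mult.assoc mult.left_commute)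
qed (use cocyclesD[OF assms(1)] cocyclesD[OF assms(2)] in auto)

lemma cocycle_inv_closed:
  assumes "(f :: 'g \<Rightarrow> 'g \<Rightarrow> 'k::field) \<in> cocycles2 G"
  shows "(\<lambda>x y. inverse (f x y)) \<in> cocycles2 G"
proof (rule cocyclesI)
  fix x y z assume xyz: "x \<in> carrier G" "y \<in> carrier G" "z \<in> carrier G"
  have "f y z * f x (y \<otimes>\<^bsub>G\<^esub> z) = f (x \<otimes>\<^bsub>G\<^esub> y) z * f x y"
    using cocyclesD(3)[OF assms(1) xyz] by auto
  then show "inverse (f y z) * inverse (f x (y \<otimes>\<^bsub>G\<^esub> z)) =
        inverse (f (x \<otimes>\<^bsub>G\<^esub> y) z) * inverse (f x y)"
    by (metis inverse_mult_distrib)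
qed (use cocyclesD[OF assms(1)] in auto)

lemma comm_group_cg: "comm_group (cocycle_group G :: ('g \<Rightarrow> 'g \<Rightarrow> 'k::field) monoid)"
proof (rule comm_groupI)
  show "\<one>\<^bsub>cocycle_group G\<^esub> \<in> carrier (cocycle_group G :: ('g \<Rightarrow> 'g \<Rightarrow> 'k::field) monoid)"
    by (simp add: one_cg carrier_cg cocycles2_def)
next
  fix x :: "'g \<Rightarrow> 'g \<Rightarrow> 'k" assume x: "x \<in> carrier (cocycle_group G)"
  show "\<exists>y\<in>carrier (cocycle_group G). y \<otimes>\<^bsub>cocycle_group G\<^esub> x = \<one>\<^bsub>cocycle_group G\<^esub>"
  proof (intro bexI)
    show "(\<lambda>u v. inverse (x u v)) \<in> carrier (cocycle_group G)"
      using x by (simp add: carrier_cg cocycle_inv_closed)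
    show "(\<lambda>u v. inverse (x u v)) \<otimes>\<^bsub>cocycle_group G\<^esub> x = \<one>\<^bsub>cocycle_group G\<^esub>"
      using x cocyclesD(1,2)[of x G] unfolding mult_cg one_cg carrier_cg
      by (intro ext) (metis inverse_1 left_inverse mult_1)
  qed
qed (auto simp: carrier_cg mult_cg one_cg cocycle_mult_closed mult_ac)

lemma inv_cg:
  assumes "(f :: 'g \<Rightarrow> 'g \<Rightarrow> 'k::field) \<in> cocycles2 G"
  shows "inv\<^bsub>cocycle_group G\<^esub> f = (\<lambda>x y. inverse (f x y))"
proof -
  interpret comm_group "cocycle_group G :: ('g \<Rightarrow> 'g \<Rightarrow> 'k::field) monoid" by (rule comm_group_cg)
  show ?thesis
  proof (rule inv_equality)
    show "(\<lambda>x y. inverse (f x y)) \<otimes>\<^bsub>cocycle_group G\<^esub> f = \<one>\<^bsub>cocycle_group G\<^esub>"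
      using assms cocyclesD(1,2)[of f G] unfolding mult_cg one_cg
      by (intro ext) (metis inverse_1 left_inverse mult_1)
  qed (use assms in \<open>auto simp: carrier_cg cocycle_inv_closed\<close>)
qed

lemma (in group) cob_in_cocycles:
  assumes "(f :: 'a \<Rightarrow> 'a \<Rightarrow> 'k::field) \<in> coboundaries2 G"
  shows "f \<in> cocycles2 G"
proof -
  note assms = TrueI assms
  obtain h where h: "\<forall>x\<in>carrier G. h x \<noteq> 0"
    "\<And>x y. f x y = (if x \<in> carrier G \<and> y \<in> carrier G then h y * inverse (h (x \<otimes> y)) * h x else 1)"
    using assms(2) unfolding coboundaries2_def by blast
  show ?thesis
  proof (rule cocyclesI)
    fix x y z assume xyz: "x \<in> carrier G" "y \<in> carrier G" "z \<in> carrier G"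
    have nz: "h x \<noteq> 0" "h y \<noteq> 0" "h z \<noteq> 0" "h (x \<otimes> y) \<noteq> 0" "h (y \<otimes> z) \<noteq> 0"
      "h (x \<otimes> y \<otimes> z) \<noteq> 0" using h(1) xyz by auto
    show "f y z * f x (y \<otimes> z) = f (x \<otimes> y) z * f x y"
      using xyz nz by (simp add: h(2) m_assoc field_simps)
  qed (use h in auto)
qed

lemma cob_char:
  "((f :: 'g \<Rightarrow> 'g \<Rightarrow> 'k::field) \<in> coboundaries2 G) \<longleftrightarrow> (\<exists>h. (\<forall>x\<in>carrier G. h x \<noteq> 0) \<and>
      (\<forall>x y. f x y = (if x \<in> carrier G \<and> y \<in> carrier G
                      then h y * inverse (h (x \<otimes>\<^bsub>G\<^esub> y)) * h x else 1)))"
  by (simp add: coboundaries2_def)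

lemma subgroup_cob:
  fixes G :: "('g, 'b) monoid_scheme"
  assumes "group G"
  shows "subgroup (coboundaries2 G) (cocycle_group G :: ('g \<Rightarrow> 'g \<Rightarrow> 'k::field) monoid)"
proof -
  interpret comm_group "cocycle_group G :: ('g \<Rightarrow> 'g \<Rightarrow> 'k::field) monoid" by (rule comm_group_cg)
  show ?thesis
  proof (rule subgroupI)
    show "coboundaries2 G \<subseteq> carrier (cocycle_group G :: ('g \<Rightarrow> 'g \<Rightarrow> 'k::field) monoid)"
      using group.cob_in_cocycles[OF assms] by (auto simp: carrier_cg)
    have "(\<lambda>x y. 1) \<in> (coboundaries2 G :: ('g \<Rightarrow> 'g \<Rightarrow> 'k::field) set)"
      unfolding cob_char by (rule exI[of _ "\<lambda>x. 1"]) simp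
    then show "(coboundaries2 G :: ('g \<Rightarrow> 'g \<Rightarrow> 'k::field) set) \<noteq> {}" by blast
  next
    fix f :: "'g \<Rightarrow> 'g \<Rightarrow> 'k" assume f: "f \<in> coboundaries2 G"
    then obtain h where h: "\<forall>x\<in>carrier G. h x \<noteq> 0"
      "\<And>x y. f x y = (if x \<in> carrier G \<and> y \<in> carrier G then h y * inverse (h (x \<otimes>\<^bsub>G\<^esub> y)) * h x else 1)"
      unfolding cob_char by blast
    have "(\<lambda>x y. inverse (f x y)) \<in> (coboundaries2 G :: ('g \<Rightarrow> 'g \<Rightarrow> 'k::field) set)"
      unfolding cob_char
      by (rule exI[of _ "\<lambda>x. inverse (h x)"]) (use h in \<open>auto simp: field_simps\<close>)
    then show "inv\<^bsub>cocycle_group G\<^esub> f \<in> coboundaries2 G"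
      using inv_cg[OF group.cob_in_cocycles[OF assms f]] by simp
  next
    fix f g :: "'g \<Rightarrow> 'g \<Rightarrow> 'k" assume f: "f \<in> coboundaries2 G" and g: "g \<in> coboundaries2 G"
    obtain h where h: "\<forall>x\<in>carrier G. h x \<noteq> 0"
      "\<And>x y. f x y = (if x \<in> carrier G \<and> y \<in> carrier G then h y * inverse (h (x \<otimes>\<^bsub>G\<^esub> y)) * h x else 1)"
      using f unfolding cob_char by blast
    obtain k where k: "\<forall>x\<in>carrier G. k x \<noteq> 0"
      "\<And>x y. g x y = (if x \<in> carrier G \<and> y \<in> carrier G then k y * inverse (k (x \<otimes>\<^bsub>G\<^esub> y)) * k x else 1)"
      using g unfolding cob_char by blast
    have "(\<lambda>x y. f x y * g x y) \<in> (coboundaries2 G :: ('g \<Rightarrow> 'g \<Rightarrow> 'k::field) set)"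
      unfolding cob_char
      by (rule exI[of _ "\<lambda>x. h x * k x"]) (use h k in \<open>auto simp: field_simps\<close>)
    then show "f \<otimes>\<^bsub>cocycle_group G\<^esub> g \<in> coboundaries2 G" by (simp add: mult_cg)
  qed
qed

lemma group_H2:
  fixes G :: "('g, 'b) monoid_scheme"
  assumes "group G"
  shows "group (H2 G TYPE('k::field))"
proof -
  interpret comm_group "cocycle_group G :: ('g \<Rightarrow> 'g \<Rightarrow> 'k::field) monoid" by (rule comm_group_cg)
  have "coboundaries2 G \<lhd> (cocycle_group G :: ('g \<Rightarrow> 'g \<Rightarrow> 'k::field) monoid)"
    by (rule subgroup_imp_normal[OF subgroup_cob[OF assms]])
  then show ?thesis unfolding H2_def by (rule normal.factorgroup_is_group)
qed


section \<open>Central extension attached to a cocycle\<close>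

definition Ext :: "('g, 'b) monoid_scheme \<Rightarrow> ('g \<Rightarrow> 'g \<Rightarrow> 'k::field) \<Rightarrow> ('k \<times> 'g) monoid" where
  "Ext G f = \<lparr> carrier = {p. fst p \<noteq> 0 \<and> snd p \<in> carrier G},
     monoid.mult = (\<lambda>p q. (fst p * fst q * f (snd p) (snd q), snd p \<otimes>\<^bsub>G\<^esub> snd q)),
     one = (inverse (f \<one>\<^bsub>G\<^esub> \<one>\<^bsub>G\<^esub>), \<one>\<^bsub>G\<^esub>) \<rparr>"

definition sc :: "'k::field \<Rightarrow> 'k \<times> 'g \<Rightarrow> 'k \<times> 'g" where
  "sc c p = (c * fst p, snd p)"

locale ext = group G for G :: "('g, 'b) monoid_scheme" (structure) +
  fixes f :: "'g \<Rightarrow> 'g \<Rightarrow> 'k::field"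
  assumes f_coc: "f \<in> cocycles2 G"
begin

abbreviation "E \<equiv> Ext G f"

lemma f_nz: "x \<in> carrier G \<Longrightarrow> y \<in> carrier G \<Longrightarrow> f x y \<noteq> 0"
  using cocyclesD(1)[OF f_coc] by blast

lemma carrE: "p \<in> carrier E \<longleftrightarrow> fst p \<noteq> 0 \<and> snd p \<in> carrier G"
  by (simp add: Ext_def)

lemma multE: "p \<otimes>\<^bsub>E\<^esub> q = (fst p * fst q * f (snd p) (snd q), snd p \<otimes> snd q)"
  by (simp add: Ext_def)

lemma oneE: "\<one>\<^bsub>E\<^esub> = (inverse (f \<one> \<one>), \<one>)"
  by (simp add: Ext_def)

lemma groupE: "group E"
proof (rule groupI)
  fix x y assume "x \<in> carrier E" "y \<in> carrier E"
  then show "x \<otimes>\<^bsub>E\<^esub> y \<in> carrier E" by (simp add: carrE multE f_nz)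
next
  show "\<one>\<^bsub>E\<^esub> \<in> carrier E" by (simp add: carrE oneE f_nz)
next
  fix x y z assume "x \<in> carrier E" "y \<in> carrier E" "z \<in> carrier E"
  then show "x \<otimes>\<^bsub>E\<^esub> y \<otimes>\<^bsub>E\<^esub> z = x \<otimes>\<^bsub>E\<^esub> (y \<otimes>\<^bsub>E\<^esub> z)"
    using cocyclesD(3)[OF f_coc, of "snd x" "snd y" "snd z"]
    by (simp add: carrE multE m_assoc)
next
  fix x assume "x \<in> carrier E"
  then show "\<one>\<^bsub>E\<^esub> \<otimes>\<^bsub>E\<^esub> x = x"
    using cocycle_one_left[OF f_coc, of "snd x"] f_nz[of \<one> \<one>]
    by (cases x) (simp add: carrE multE oneE)
next
  fix x assume x: "x \<in> carrier E"
  define y where "y = (inverse (fst x * f (inv (snd x)) (snd x) * f \<one> \<one>), inv (snd x))"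
  have "y \<in> carrier E" using x f_nz by (simp add: y_def carrE)
  moreover have "y \<otimes>\<^bsub>E\<^esub> x = \<one>\<^bsub>E\<^esub>"
    using x f_nz[of "inv (snd x)" "snd x"] f_nz[of \<one> \<one>]
    by (simp add: y_def carrE multE oneE field_simps)
  ultimately show "\<exists>y\<in>carrier E. y \<otimes>\<^bsub>E\<^esub> x = \<one>\<^bsub>E\<^esub>" by blast
qed

lemma sc_carr: "c \<noteq> 0 \<Longrightarrow> p \<in> carrier E \<Longrightarrow> sc c p \<in> carrier E"
  by (simp add: sc_def carrE)

lemma sc_left: "sc c p \<otimes>\<^bsub>E\<^esub> q = sc c (p \<otimes>\<^bsub>E\<^esub> q)"
  by (simp add: sc_def multE mult_ac)

lemma sc_right: "p \<otimes>\<^bsub>E\<^esub> sc c q = sc c (p \<otimes>\<^bsub>E\<^esub> q)"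
  by (simp add: sc_def multE mult_ac)

lemma sc_sc: "sc c (sc d p) = sc (c * d) p"
  by (simp add: sc_def mult_ac)

lemma sc_1: "sc 1 p = p"
  by (simp add: sc_def)

lemma sc_pow: "p \<in> carrier E \<Longrightarrow> (sc c p) [^]\<^bsub>E\<^esub> (k::nat) = sc (c ^ k) (p [^]\<^bsub>E\<^esub> k)"
proof (induction k)
  case 0 then show ?case by (simp add: sc_1)
next
  case (Suc k)
  then show ?case by (simp add: sc_left sc_right sc_sc mult_ac)
qed

lemma sc_fix: "p \<in> carrier E \<Longrightarrow> sc c p = p \<Longrightarrow> c = 1"
  by (cases p) (simp add: sc_def carrE)

lemma snd_mult: "snd (p \<otimes>\<^bsub>E\<^esub> q) = snd p \<otimes> snd q"
  by (simp add: multE)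

lemma snd_pow: "p \<in> carrier E \<Longrightarrow> snd (p [^]\<^bsub>E\<^esub> (k::nat)) = snd p [^] k"
proof (induction k)
  case 0 then show ?case by (simp add: oneE)
next
  case (Suc k)
  then show ?case by (simp add: snd_mult)
qed

lemma same_snd: "p \<in> carrier E \<Longrightarrow> q \<in> carrier E \<Longrightarrow> snd p = snd q \<Longrightarrow> p = sc (fst p / fst q) q"
  by (cases p, cases q) (simp add: sc_def carrE)

end


section \<open>Extensions for the group G n a m\<close>

locale gnam_ext = gnam +
  fixes f :: "int \<times> int \<Rightarrow> int \<times> int \<Rightarrow> 'k::field"
  assumes f_coc': "f \<in> cocycles2 (Gnam n a m)"
    and roots: "\<And>(c::'k) d. d \<ge> 1 \<Longrightarrow> \<exists>x. x ^ d = c"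

sublocale gnam_ext \<subseteq> ext "Gnam n a m" f
  by (rule ext.intro[OF groupG], rule ext_axioms.intro, rule f_coc')

context gnam_ext
begin

sublocale E: group E by (rule groupE)

lemma T_exists: "\<exists>T. T \<in> carrier E \<and> snd T = tt \<and> T [^]\<^bsub>E\<^esub> n = \<one>\<^bsub>E\<^esub>"
proof -
  define T0 where "T0 = ((1::'k), tt)"
  have T0: "T0 \<in> carrier E" by (simp add: T0_def carrE tt_carr)
  have p: "T0 [^]\<^bsub>E\<^esub> n \<in> carrier E" using T0 by simp
  have "snd (T0 [^]\<^bsub>E\<^esub> n) = snd (\<one>\<^bsub>E\<^esub>)"
    using T0 by (simp add: snd_pow T0_def tt_pow oneE oneG)
  then have eq: "T0 [^]\<^bsub>E\<^esub> n = sc (fst (T0 [^]\<^bsub>E\<^esub> n) / fst (\<one>\<^bsub>E\<^esub>)) \<one>\<^bsub>E\<^esub>"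
    using same_snd p by simp
  define c0 where "c0 = fst (T0 [^]\<^bsub>E\<^esub> n) / fst (\<one>\<^bsub>E\<^esub>)"
  have c0: "c0 \<noteq> 0" using p E.one_closed by (simp add: c0_def carrE)
  obtain r where r: "r ^ n = inverse c0" using roots n1 by blast
  have "r ^ n \<noteq> 0" using r c0 by simp
  then have rnz: "r \<noteq> 0" using n1 by auto
  show ?thesis
  proof (intro exI conjI)
    show "sc r T0 \<in> carrier E" using rnz T0 by (simp add: sc_carr)
    show "snd (sc r T0) = tt" by (simp add: sc_def T0_def)
    have "sc r T0 [^]\<^bsub>E\<^esub> n = sc (r ^ n) (sc c0 \<one>\<^bsub>E\<^esub>)"
      using T0 eq by (simp add: sc_pow c0_def)
    also have "\<dots> = \<one>\<^bsub>E\<^esub>" using r c0 by (simp add: sc_sc sc_1)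
    finally show "sc r T0 [^]\<^bsub>E\<^esub> n = \<one>\<^bsub>E\<^esub>" .
  qed
qed

definition "Tg = (SOME T. T \<in> carrier E \<and> snd T = tt \<and> T [^]\<^bsub>E\<^esub> n = \<one>\<^bsub>E\<^esub>)"

lemma Tg: "Tg \<in> carrier E" "snd Tg = tt" "Tg [^]\<^bsub>E\<^esub> n = \<one>\<^bsub>E\<^esub>"
  using someI_ex[OF T_exists] by (auto simp: Tg_def)

lemma Tg_mod: "Tg [^]\<^bsub>E\<^esub> (k::nat) = Tg [^]\<^bsub>E\<^esub> (k mod n)"
proof -
  have "Tg [^]\<^bsub>E\<^esub> k = Tg [^]\<^bsub>E\<^esub> (n * (k div n) + k mod n)" by simp
  also have "\<dots> = (Tg [^]\<^bsub>E\<^esub> n) [^]\<^bsub>E\<^esub> (k div n) \<otimes>\<^bsub>E\<^esub> Tg [^]\<^bsub>E\<^esub> (k mod n)"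
    using Tg(1) by (simp add: E.nat_pow_mult E.nat_pow_pow)
  also have "\<dots> = Tg [^]\<^bsub>E\<^esub> (k mod n)" using Tg by simp
  finally show ?thesis .
qed

lemma Tg_cong: "int k mod int n = int k' mod int n \<Longrightarrow> Tg [^]\<^bsub>E\<^esub> k = Tg [^]\<^bsub>E\<^esub> k'"
  by (metis Tg_mod of_nat_eq_iff zmod_int)

lemma S_exists: "\<exists>S. S \<in> carrier E \<and> snd S = ss \<and> S [^]\<^bsub>E\<^esub> (2::nat) = Tg [^]\<^bsub>E\<^esub> MM"
proof -
  define S0 where "S0 = ((1::'k), ss)"
  have S0: "S0 \<in> carrier E" by (simp add: S0_def carrE ss_carr)
  have p: "S0 [^]\<^bsub>E\<^esub> (2::nat) \<in> carrier E" using S0 by simp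
  have q: "Tg [^]\<^bsub>E\<^esub> MM \<in> carrier E" using Tg by simp
  have "snd (S0 [^]\<^bsub>E\<^esub> (2::nat)) = snd (Tg [^]\<^bsub>E\<^esub> MM)"
    using S0 Tg by (simp add: snd_pow snd_mult S0_def tt_pow oneG multG ss_def Gnam_mult_def MM_int numeral_2_eq_2)
  then have eq: "S0 [^]\<^bsub>E\<^esub> (2::nat) = sc (fst (S0 [^]\<^bsub>E\<^esub> (2::nat)) / fst (Tg [^]\<^bsub>E\<^esub> MM)) (Tg [^]\<^bsub>E\<^esub> MM)"
    using same_snd p q by simp
  define c1 where "c1 = fst (S0 [^]\<^bsub>E\<^esub> (2::nat)) / fst (Tg [^]\<^bsub>E\<^esub> MM)"
  have c1: "c1 \<noteq> 0" using p q by (simp add: c1_def carrE)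
  obtain r where r: "r ^ 2 = inverse c1" using roots[of 2] by auto
  have "r ^ 2 \<noteq> 0" using r c1 by simp
  then have rnz: "r \<noteq> 0" by auto
  show ?thesis
  proof (intro exI conjI)
    show "sc r S0 \<in> carrier E" using rnz S0 by (simp add: sc_carr)
    show "snd (sc r S0) = ss" by (simp add: sc_def S0_def)
    have "sc r S0 [^]\<^bsub>E\<^esub> (2::nat) = sc (r ^ 2) (sc c1 (Tg [^]\<^bsub>E\<^esub> MM))"
      using S0 eq by (simp add: sc_pow c1_def)
    also have "\<dots> = Tg [^]\<^bsub>E\<^esub> MM" using r c1 by (simp add: sc_sc sc_1)
    finally show "sc r S0 [^]\<^bsub>E\<^esub> (2::nat) = Tg [^]\<^bsub>E\<^esub> MM" .
  qed
qed

definition "Sg = (SOME S. S \<in> carrier E \<and> snd S = ss \<and> S [^]\<^bsub>E\<^esub> (2::nat) = Tg [^]\<^bsub>E\<^esub> MM)"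

lemma Sg: "Sg \<in> carrier E" "snd Sg = ss" "Sg [^]\<^bsub>E\<^esub> (2::nat) = Tg [^]\<^bsub>E\<^esub> MM"
  using someI_ex[OF S_exists] by (auto simp: Sg_def)

lemma Sg2: "Sg \<otimes>\<^bsub>E\<^esub> Sg = Tg [^]\<^bsub>E\<^esub> MM"
  using Sg by (simp add: numeral_2_eq_2)

lemma beta_exists: "\<exists>b. b \<noteq> 0 \<and> Sg \<otimes>\<^bsub>E\<^esub> Tg = sc b (Tg [^]\<^bsub>E\<^esub> AA \<otimes>\<^bsub>E\<^esub> Sg)"
proof -
  have p: "Sg \<otimes>\<^bsub>E\<^esub> Tg \<in> carrier E" and q: "Tg [^]\<^bsub>E\<^esub> AA \<otimes>\<^bsub>E\<^esub> Sg \<in> carrier E"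
    using Sg Tg by auto
  have 1: "ss \<otimes>\<^bsub>G\<^esub> tt = (a mod int n, 1)"
    by (simp add: multG ss_def tt_def Gnam_mult_def mod_mult_right_eq)
  have 2: "tt [^]\<^bsub>G\<^esub> AA \<otimes>\<^bsub>G\<^esub> ss = (a mod int n, 1)"
    by (simp add: tt_pow multG ss_def Gnam_mult_def AA_int)
  have "snd (Sg \<otimes>\<^bsub>E\<^esub> Tg) = snd (Tg [^]\<^bsub>E\<^esub> AA \<otimes>\<^bsub>E\<^esub> Sg)"
    using Sg Tg 1 2 by (simp add: snd_mult snd_pow)
  then have "Sg \<otimes>\<^bsub>E\<^esub> Tg = sc (fst (Sg \<otimes>\<^bsub>E\<^esub> Tg) / fst (Tg [^]\<^bsub>E\<^esub> AA \<otimes>\<^bsub>E\<^esub> Sg)) (Tg [^]\<^bsub>E\<^esub> AA \<otimes>\<^bsub>E\<^esub> Sg)"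
    using same_snd p q by blast
  moreover have "fst (Sg \<otimes>\<^bsub>E\<^esub> Tg) / fst (Tg [^]\<^bsub>E\<^esub> AA \<otimes>\<^bsub>E\<^esub> Sg) \<noteq> 0"
    using p q by (simp add: carrE)
  ultimately show ?thesis by blast
qed

definition "bet = (SOME b. b \<noteq> 0 \<and> Sg \<otimes>\<^bsub>E\<^esub> Tg = sc b (Tg [^]\<^bsub>E\<^esub> AA \<otimes>\<^bsub>E\<^esub> Sg))"

lemma bet: "bet \<noteq> 0" "Sg \<otimes>\<^bsub>E\<^esub> Tg = sc bet (Tg [^]\<^bsub>E\<^esub> AA \<otimes>\<^bsub>E\<^esub> Sg)"
  using someI_ex[OF beta_exists] by (auto simp: bet_def)

end


context gnam_ext
begin

lemma Tp: "Tg [^]\<^bsub>E\<^esub> (k::nat) \<in> carrier E" using Tg(1) by simp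
lemma Sp: "Sg [^]\<^bsub>E\<^esub> (k::nat) \<in> carrier E" using Sg(1) by simp

lemma R1: "Sg \<otimes>\<^bsub>E\<^esub> Tg [^]\<^bsub>E\<^esub> j = sc (bet ^ j) (Tg [^]\<^bsub>E\<^esub> (AA * j) \<otimes>\<^bsub>E\<^esub> Sg)"
proof (induction j)
  case 0
  then show ?case using Sg(1) by (simp add: sc_1)
next
  case (Suc j)
  have "Sg \<otimes>\<^bsub>E\<^esub> Tg [^]\<^bsub>E\<^esub> Suc j = (Sg \<otimes>\<^bsub>E\<^esub> Tg [^]\<^bsub>E\<^esub> j) \<otimes>\<^bsub>E\<^esub> Tg"
    using Sg(1) Tg(1) Tp by (simp add: E.m_assoc)
  also have "\<dots> = sc (bet ^ j) (Tg [^]\<^bsub>E\<^esub> (AA * j) \<otimes>\<^bsub>E\<^esub> (Sg \<otimes>\<^bsub>E\<^esub> Tg))"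
    using Suc Sg(1) Tg(1) Tp by (simp add: E.m_assoc sc_left)
  also have "\<dots> = sc (bet ^ Suc j) (Tg [^]\<^bsub>E\<^esub> (AA * j) \<otimes>\<^bsub>E\<^esub> Tg [^]\<^bsub>E\<^esub> AA \<otimes>\<^bsub>E\<^esub> Sg)"
    using Sg(1) Tg(1) Tp by (simp add: bet(2) sc_right sc_sc E.m_assoc mult.commute)
  also have "\<dots> = sc (bet ^ Suc j) (Tg [^]\<^bsub>E\<^esub> (AA * Suc j) \<otimes>\<^bsub>E\<^esub> Sg)"
    using Tg(1) by (simp add: E.nat_pow_mult add.commute)
  finally show ?case .
qed

lemma bet_n: "bet ^ n = 1"
proof -
  have "Tg [^]\<^bsub>E\<^esub> (AA * n) = \<one>\<^bsub>E\<^esub>"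
    using Tg_mod[of "AA * n"] by simp
  then have "sc (bet ^ n) Sg = Sg"
    using R1[of n] Tg Sg(1) by simp
  then show ?thesis using sc_fix Sg(1) by blast
qed

lemma AM_cong: "int (AA * MM) mod int n = int MM mod int n"
proof -
  have "int (AA * MM) mod int n = (a * m) mod int n"
    by (simp add: AA_int MM_int mod_mult_eq)
  then show ?thesis using amm MM_int by simp
qed

lemma AA_cong: "int (AA * AA) mod int n = int 1 mod int n"
proof -
  have "int (AA * AA) mod int n = (a * a) mod int n"
    by (simp add: AA_int mod_mult_eq)
  then show ?thesis using asq by (simp add: power2_eq_square)
qed

lemma bet_M: "bet ^ MM = 1"
proof -
  have "Sg \<otimes>\<^bsub>E\<^esub> Tg [^]\<^bsub>E\<^esub> MM = Sg \<otimes>\<^bsub>E\<^esub> (Sg \<otimes>\<^bsub>E\<^esub> Sg)" by (simp add: Sg2)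
  also have "\<dots> = (Sg \<otimes>\<^bsub>E\<^esub> Sg) \<otimes>\<^bsub>E\<^esub> Sg" using Sg(1) by (simp add: E.m_assoc)
  also have "\<dots> = Tg [^]\<^bsub>E\<^esub> MM \<otimes>\<^bsub>E\<^esub> Sg" by (simp add: Sg2)
  finally have 1: "Sg \<otimes>\<^bsub>E\<^esub> Tg [^]\<^bsub>E\<^esub> MM = Tg [^]\<^bsub>E\<^esub> MM \<otimes>\<^bsub>E\<^esub> Sg" .
  have "Tg [^]\<^bsub>E\<^esub> (AA * MM) = Tg [^]\<^bsub>E\<^esub> MM" by (rule Tg_cong[OF AM_cong])
  then have "sc (bet ^ MM) (Tg [^]\<^bsub>E\<^esub> MM \<otimes>\<^bsub>E\<^esub> Sg) = Tg [^]\<^bsub>E\<^esub> MM \<otimes>\<^bsub>E\<^esub> Sg"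
    using R1[of MM] 1 by simp
  then show ?thesis using sc_fix Sg(1) Tp by blast
qed

lemma bet_A: "bet ^ Suc AA = 1"
proof -
  have 1: "Sg \<otimes>\<^bsub>E\<^esub> (Sg \<otimes>\<^bsub>E\<^esub> Tg) = Tg \<otimes>\<^bsub>E\<^esub> Tg [^]\<^bsub>E\<^esub> MM"
  proof -
    have "Sg \<otimes>\<^bsub>E\<^esub> (Sg \<otimes>\<^bsub>E\<^esub> Tg) = Tg [^]\<^bsub>E\<^esub> MM \<otimes>\<^bsub>E\<^esub> Tg"
      using Sg(1) Tg(1) by (simp add: E.m_assoc[symmetric] Sg2)
    also have "\<dots> = Tg \<otimes>\<^bsub>E\<^esub> Tg [^]\<^bsub>E\<^esub> MM"
      using Tg(1) by (simp add: E.nat_pow_Suc2[symmetric])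
    finally show ?thesis .
  qed
  have "Sg \<otimes>\<^bsub>E\<^esub> (Sg \<otimes>\<^bsub>E\<^esub> Tg) = sc bet ((Sg \<otimes>\<^bsub>E\<^esub> Tg [^]\<^bsub>E\<^esub> AA) \<otimes>\<^bsub>E\<^esub> Sg)"
    using Sg(1) Tp by (simp add: bet(2) sc_right E.m_assoc)
  also have "\<dots> = sc (bet ^ Suc AA) (Tg [^]\<^bsub>E\<^esub> (AA * AA) \<otimes>\<^bsub>E\<^esub> Sg \<otimes>\<^bsub>E\<^esub> Sg)"
    by (simp add: R1 sc_left sc_sc)
  also have "\<dots> = sc (bet ^ Suc AA) (Tg \<otimes>\<^bsub>E\<^esub> Tg [^]\<^bsub>E\<^esub> MM)"
    using Tg_cong[OF AA_cong] Tg(1) Sg(1) by (simp add: E.m_assoc Sg2)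
  finally have "sc (bet ^ Suc AA) (Tg \<otimes>\<^bsub>E\<^esub> Tg [^]\<^bsub>E\<^esub> MM) = Tg \<otimes>\<^bsub>E\<^esub> Tg [^]\<^bsub>E\<^esub> MM"
    using 1 by simp
  then show ?thesis using sc_fix Tg(1) Tp by blast
qed

end


context gnam_ext
begin

definition "sec g = Tg [^]\<^bsub>E\<^esub> nat (fst g) \<otimes>\<^bsub>E\<^esub> Sg [^]\<^bsub>E\<^esub> nat (snd g)"

lemma sec_carr: "sec g \<in> carrier E" by (simp add: sec_def Tp Sp)

lemma sec_snd: "g \<in> carrier G \<Longrightarrow> snd (sec g) = g"
  using elt_decomp[of "fst g" "snd g"] by (simp add: sec_def snd_mult snd_pow Tg Sg)

lemma bet_nz: "bet ^ k \<noteq> 0" using bet(1) by simp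

lemma sec_mult:
  assumes "g \<in> carrier G" "g' \<in> carrier G"
  shows "sec g \<otimes>\<^bsub>E\<^esub> sec g' = sc (if snd g = 1 then bet ^ nat (fst g') else 1) (sec (g \<otimes>\<^bsub>G\<^esub> g'))"
proof -
  obtain i e where g0: "g = (i, e)" "0 \<le> i" "i < int n" "e = 0 \<or> e = 1" using assms(1) by (cases g) (auto simp: carrG)
  obtain j e' where g0': "g' = (j, e')" "0 \<le> j" "j < int n" "e' = 0 \<or> e' = 1" using assms(2) by (cases g') (auto simp: carrG)
  obtain I where Ieq: "i = int I" using g0(2) nonneg_int_cases by blast
  obtain J where Jeq: "j = int J" using g0'(2) nonneg_int_cases by blast
  have g: "g = (int I, e)" "e = 0 \<or> e = 1" using g0 Ieq by auto
  have g': "g' = (int J, e')" "e' = 0 \<or> e' = 1" using g0' Jeq by auto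
  show ?thesis
  proof (cases "e = 0")
    case e0: True
    have "Tg [^]\<^bsub>E\<^esub> nat ((int I + int J) mod int n) = Tg [^]\<^bsub>E\<^esub> (I + J)"
      by (rule Tg_cong) (use n1 in simp)
    moreover have "(e' mod 2) = e'" using g' by auto
    ultimately show ?thesis using e0 g g'
      using Sg(1) Tg(1) by (simp add: sec_def multG Gnam_mult_def sc_1 Tp Sp E.int_pow_closed E.m_assoc[symmetric] E.nat_pow_mult)
  next
    case False
    then have e1: "e = 1" using g by auto
    have TS: "Tg [^]\<^bsub>E\<^esub> I \<otimes>\<^bsub>E\<^esub> Sg \<otimes>\<^bsub>E\<^esub> Tg [^]\<^bsub>E\<^esub> J
        = sc (bet ^ J) (Tg [^]\<^bsub>E\<^esub> (I + AA * J) \<otimes>\<^bsub>E\<^esub> Sg)"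
    proof -
      have "Tg [^]\<^bsub>E\<^esub> I \<otimes>\<^bsub>E\<^esub> Sg \<otimes>\<^bsub>E\<^esub> Tg [^]\<^bsub>E\<^esub> J = sc (bet ^ J) (Tg [^]\<^bsub>E\<^esub> I \<otimes>\<^bsub>E\<^esub> (Tg [^]\<^bsub>E\<^esub> (AA * J) \<otimes>\<^bsub>E\<^esub> Sg))"
        using Sg(1) Tp by (simp add: E.m_assoc R1 sc_right)
      also have "\<dots> = sc (bet ^ J) (Tg [^]\<^bsub>E\<^esub> (I + AA * J) \<otimes>\<^bsub>E\<^esub> Sg)"
        using Sg(1) Tg(1) Tp by (simp add: E.m_assoc[symmetric] E.nat_pow_mult)
      finally show ?thesis .
    qed
    show ?thesis
    proof (cases "e' = 0")
      case e'0: True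
      have "Tg [^]\<^bsub>E\<^esub> nat ((int I + a * int J) mod int n) = Tg [^]\<^bsub>E\<^esub> (I + AA * J)"
        by (rule Tg_cong) (use n1 in \<open>simp add: AA_int modL7\<close>)
      then show ?thesis using e1 e'0 g g' TS Sg(1) Tp
        by (simp add: sec_def multG Gnam_mult_def)
    next
      case False
      then have e'1: "e' = 1" using g' by auto
      have "Tg [^]\<^bsub>E\<^esub> nat ((int I + a * int J + m) mod int n) = Tg [^]\<^bsub>E\<^esub> (I + AA * J + MM)"
        by (rule Tg_cong) (use n1 in \<open>simp add: AA_int MM_int modL7 modL8 modL9\<close>)
      moreover have "sec g \<otimes>\<^bsub>E\<^esub> sec g' = sc (bet ^ J) (Tg [^]\<^bsub>E\<^esub> (I + AA * J + MM))"
      proof -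
        have "sec g \<otimes>\<^bsub>E\<^esub> sec g' = (Tg [^]\<^bsub>E\<^esub> I \<otimes>\<^bsub>E\<^esub> Sg \<otimes>\<^bsub>E\<^esub> Tg [^]\<^bsub>E\<^esub> J) \<otimes>\<^bsub>E\<^esub> Sg"
          using g g' e1 e'1 Sg(1) Tp by (simp add: sec_def E.m_assoc)
        also have "\<dots> = sc (bet ^ J) (Tg [^]\<^bsub>E\<^esub> (I + AA * J) \<otimes>\<^bsub>E\<^esub> (Sg \<otimes>\<^bsub>E\<^esub> Sg))"
          using Sg(1) Tp by (simp add: TS sc_left E.m_assoc)
        also have "\<dots> = sc (bet ^ J) (Tg [^]\<^bsub>E\<^esub> (I + AA * J + MM))"
          using Tg(1) by (simp add: Sg2 E.nat_pow_mult)
        finally show ?thesis .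
      qed
      ultimately show ?thesis using e1 e'1 g g' Sg(1) Tp
        by (simp add: sec_def multG Gnam_mult_def)
    qed
  qed
qed

end


definition cb :: "nat \<Rightarrow> int \<Rightarrow> int \<Rightarrow> 'k::field \<Rightarrow> int \<times> int \<Rightarrow> int \<times> int \<Rightarrow> 'k" where
  "cb n a m \<beta> x y = (if x \<in> carrier (Gnam n a m) \<and> y \<in> carrier (Gnam n a m)
      then (if snd x = 1 then \<beta> ^ nat (fst y) else 1) else 1)"

lemma pow_cong:
  assumes "(b::'k::field) ^ n = 1" "int k mod int n = int k' mod int n"
  shows "b ^ k = b ^ k'"
proof -
  have *: "b ^ j = b ^ (j mod n)" for j
  proof -
    have "b ^ j = b ^ (n * (j div n) + j mod n)" by simp
    also have "\<dots> = (b ^ n) ^ (j div n) * b ^ (j mod n)" by (simp only: power_add power_mult)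
    finally show ?thesis using assms(1) by simp
  qed
  have "k mod n = k' mod n" using assms(2) by (metis of_nat_eq_iff zmod_int)
  then show ?thesis using *[of k] *[of k'] by simp
qed

context gnam_ext
begin

lemma decomp: "\<exists>b\<in>coboundaries2 G. f = (\<lambda>x y. b x y * cb n a m bet x y)"
proof
  define kk where "kk g = fst (sec g)" for g
  have kk_nz: "kk g \<noteq> 0" for g using sec_carr[of g] by (simp add: kk_def carrE)
  define b where "b x y = (if x \<in> carrier G \<and> y \<in> carrier G
      then inverse (kk y) * inverse (inverse (kk (x \<otimes>\<^bsub>G\<^esub> y))) * inverse (kk x) else 1)" for x y
  show "b \<in> coboundaries2 G"
    unfolding cob_char by (rule exI[of _ "\<lambda>x. inverse (kk x)"]) (simp add: kk_nz b_def)
  show "f = (\<lambda>x y. b x y * cb n a m bet x y)"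
  proof (intro ext)
    fix x y
    show "f x y = b x y * cb n a m bet x y"
    proof (cases "x \<in> carrier G \<and> y \<in> carrier G")
      case True
      then have xy: "x \<otimes>\<^bsub>G\<^esub> y \<in> carrier G" by simp
      have sx: "sec x = (kk x, x)" using True sec_snd[of x] by (simp add: kk_def prod_eq_iff)
      have sy: "sec y = (kk y, y)" using True sec_snd[of y] by (simp add: kk_def prod_eq_iff)
      have sxy: "sec (x \<otimes>\<^bsub>G\<^esub> y) = (kk (x \<otimes>\<^bsub>G\<^esub> y), x \<otimes>\<^bsub>G\<^esub> y)"
        using xy sec_snd[of "x \<otimes>\<^bsub>G\<^esub> y"] by (simp add: kk_def prod_eq_iff)
      have "fst (sec x \<otimes>\<^bsub>E\<^esub> sec y) = fst (sc (if snd x = 1 then bet ^ nat (fst y) else 1) (sec (x \<otimes>\<^bsub>G\<^esub> y)))"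
        using sec_mult[OF True[THEN conjunct1] True[THEN conjunct2]] by simp
      then have "kk x * kk y * f x y = (if snd x = 1 then bet ^ nat (fst y) else 1) * kk (x \<otimes>\<^bsub>G\<^esub> y)"
        by (simp add: sx sy sxy multE sc_def)
      then show ?thesis using True kk_nz[of x] kk_nz[of y]
        by (simp add: b_def cb_def field_simps)
    next
      case False
      then show ?thesis using cocyclesD(2)[OF f_coc, of x y] by (auto simp: b_def cb_def)
    qed
  qed
qed

lemma main_decomp: "\<exists>\<beta>::'k. \<beta> ^ n = 1 \<and> \<beta> ^ Suc AA = 1 \<and> \<beta> ^ MM = 1 \<and>
   (\<exists>b\<in>coboundaries2 G. f = (\<lambda>x y. b x y * cb n a m \<beta> x y))"
  using bet_n bet_A bet_M decomp by blast

end


context gnam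
begin

lemma carr_cases:
  assumes "x \<in> carrier G"
  obtains I e where "x = (int I, e)" "I < n" "e = 0 \<or> e = 1"
proof -
  obtain i e where ie: "x = (i, e)" "0 \<le> i" "i < int n" "e = 0 \<or> e = 1"
    using assms by (cases x) (auto simp: carrG)
  show thesis using that[of "nat i" e] ie by auto
qed

lemma cb_coc:
  fixes \<beta> :: "'k::field"
  assumes b1: "\<beta> ^ n = 1" and b2: "\<beta> ^ Suc AA = 1" and b3: "\<beta> ^ MM = 1"
  shows "cb n a m \<beta> \<in> cocycles2 G"
proof (rule cocyclesI)
  have bnz: "\<beta> \<noteq> 0" using b1 n1 by (metis one_neq_zero zero_power less_le_trans zero_less_one)
  have P: "\<beta> ^ nat (w mod int n) = \<beta> ^ k'" if "int k' mod int n = w mod int n" for w k'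
    by (rule pow_cong[OF b1]) (use that n1 in simp)
  fix x y z assume xyz: "x \<in> carrier G" "y \<in> carrier G" "z \<in> carrier G"
  obtain I e where x: "x = (int I, e)" "e = 0 \<or> e = 1" using carr_cases[OF xyz(1)] by metis
  obtain J f' where y: "y = (int J, f')" "f' = 0 \<or> f' = 1" using carr_cases[OF xyz(2)] by metis
  obtain K g where z: "z = (int K, g)" "g = 0 \<or> g = 1" using carr_cases[OF xyz(3)] by metis
  have yz: "y \<otimes>\<^bsub>G\<^esub> z \<in> carrier G" and xy: "x \<otimes>\<^bsub>G\<^esub> y \<in> carrier G"
    using xyz groupG by (auto intro: group.subgroup_self monoid.m_closed group.is_monoid)
  show "cb n a m \<beta> y z * cb n a m \<beta> x (y \<otimes>\<^bsub>G\<^esub> z) = cb n a m \<beta> (x \<otimes>\<^bsub>G\<^esub> y) z * cb n a m \<beta> x y"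
  proof (cases "e = 1")
    case False
    then have e0: "e = 0" using x by auto
    have "snd (x \<otimes>\<^bsub>G\<^esub> y) = f'" using e0 x y by (auto simp: multG Gnam_mult_def)
    then show ?thesis using xyz yz xy e0 x y by (simp add: cb_def)
  next
    case e1: True
    show ?thesis
    proof (cases "f' = 1")
      case False
      then have f0: "f' = 0" using y by auto
      have "\<beta> ^ nat ((int J + int K) mod int n) = \<beta> ^ (J + K)" by (rule P) simp
      then show ?thesis using xyz yz xy e1 f0 x y z
        by (simp add: cb_def multG Gnam_mult_def power_add mult.commute)
    next
      case f1: True
      have "\<beta> ^ nat ((int J + a * int K + (if g = 1 then m else 0)) mod int n) = \<beta> ^ (J + AA * K + (if g = 1 then MM else 0))"
        by (rule P) (simp add: AA_int MM_int modL7 modL8 modL9 mod_simps)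
      moreover have "\<beta> ^ K * \<beta> ^ (J + AA * K + (if g = 1 then MM else 0)) = \<beta> ^ J"
      proof -
        have "\<beta> ^ K * \<beta> ^ (J + AA * K + (if g = 1 then MM else 0)) = \<beta> ^ J * (\<beta> ^ Suc AA) ^ K * (\<beta> ^ (if g = 1 then MM else 0))"
        proof -
          have e1: "\<beta> ^ (AA * K) = (\<beta> ^ AA) ^ K" "\<beta> ^ (K * AA) = (\<beta> ^ AA) ^ K" by (simp_all add: power_mult[symmetric] mult.commute)
          have e2: "(\<beta> ^ Suc AA) ^ K = \<beta> ^ K * (\<beta> ^ AA) ^ K" by (simp add: power_mult_distrib)
          show ?thesis by (simp only: power_add e1 e2 mult_ac)
        qed
        then show ?thesis using b2 b3 by simp
      qed
      ultimately show ?thesis using xyz yz xy e1 f1 x y z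
        by (simp add: cb_def multG Gnam_mult_def)
    qed
  qed
next
  fix x y assume "x \<in> carrier G" "y \<in> carrier G"
  have "\<beta> \<noteq> 0" using b1 n1 by (metis one_neq_zero zero_power less_le_trans zero_less_one)
  then show "cb n a m \<beta> x y \<noteq> 0" by (simp add: cb_def)
next
  fix x y assume "x \<notin> carrier G \<or> y \<notin> carrier G"
  then show "cb n a m \<beta> x y = 1" by (auto simp: cb_def)
qed

lemma cb_mult: "(\<lambda>x y. cb n a m \<beta> x y * cb n a m \<gamma> x y) = cb n a m (\<beta> * \<gamma>)"
  by (intro ext) (simp add: cb_def power_mult_distrib)

end


context gnam
begin

definition "CC = nat ((1 - a) mod int n)"
definition "dd = gcd CC n"

lemma CC_int: "int CC = (1 - a) mod int n" using n1 by (simp add: CC_def)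

lemma CA_cong: "int (CC + AA) mod int n = 1 mod int n"
proof -
  have "int (CC + AA) mod int n = ((1 - a) + a) mod int n"
    by (simp add: CC_int AA_int mod_add_eq)
  then show ?thesis by simp
qed

lemma dd_pos: "dd \<ge> 1" using n1 by (simp add: dd_def Suc_le_eq)
lemma dd_dvd: "dd dvd n" "dd dvd CC" by (simp_all add: dd_def)
lemma dd_N: "dd * (n div dd) = n" using dd_dvd by simp

lemma lambda_exists:
  fixes \<beta> :: "'k::field"
  assumes roots: "\<And>(c::'k) d. d \<ge> 1 \<Longrightarrow> \<exists>x. x ^ d = c"
    and bN: "\<beta> ^ (n div dd) = 1"
  shows "\<exists>l. l ^ n = 1 \<and> l ^ CC = \<beta>"
proof -
  obtain \<mu> where mu: "\<mu> ^ dd = \<beta>" using roots dd_pos by blast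
  have mun: "\<mu> ^ n = 1"
  proof -
    have "\<mu> ^ n = (\<mu> ^ dd) ^ (n div dd)" by (metis dd_N power_mult)
    then show ?thesis using mu bN by simp
  qed
  show ?thesis
  proof (cases "CC = 0")
    case True
    then have "dd = n" by (simp add: dd_def)
    then have "\<beta> = 1" using bN n1 by simp
    then show ?thesis using True by (intro exI[of _ 1]) simp
  next
    case False
    obtain x y where xy: "CC * x = n * y + dd" using bezout_nat[OF False, of n] by (auto simp: dd_def)
    show ?thesis
    proof (intro exI conjI)
      show "(\<mu> ^ x) ^ n = 1" by (metis mun power_mult mult.commute power_one)
      have "(\<mu> ^ x) ^ CC = \<mu> ^ (n * y + dd)" by (metis xy power_mult mult.commute)
      also have "\<dots> = \<beta>" using mun mu by (simp add: power_add power_mult)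
      finally show "(\<mu> ^ x) ^ CC = \<beta>" .
    qed
  qed
qed

lemma cb_cob:
  fixes \<beta> :: "'k::field"
  assumes roots: "\<And>(c::'k) d. d \<ge> 1 \<Longrightarrow> \<exists>x. x ^ d = c"
    and bN: "\<beta> ^ (n div dd) = 1"
  shows "cb n a m \<beta> \<in> coboundaries2 G"
proof -
  obtain l where l: "l ^ n = 1" "l ^ CC = \<beta>" using lambda_exists[OF roots bN] by blast
  obtain \<nu> where nu: "\<nu> ^ 2 = l ^ MM" using roots[of 2] by auto
  have lnz: "l \<noteq> 0" using l(1) n1 by (metis one_neq_zero zero_power less_le_trans zero_less_one)
  have nunz: "\<nu> \<noteq> 0" using nu lnz by (metis power_not_zero zero_power2)
  have P: "l ^ nat (w mod int n) = l ^ k'" if "int k' mod int n = w mod int n" for w k'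
    by (rule pow_cong[OF l(1)]) (use that n1 in simp)
  define h where "h g = l ^ nat (fst g) * \<nu> ^ nat (snd g)" for g
  have hnz: "h g \<noteq> 0" for g using lnz nunz by (simp add: h_def)
  have key: "\<beta> ^ J * l ^ (AA * J) = l ^ J" for J
  proof -
    have "\<beta> ^ J * l ^ (AA * J) = l ^ ((CC + AA) * J)"
      by (simp add: l(2)[symmetric] power_mult[symmetric] power_add algebra_simps)
    also have "\<dots> = l ^ J"
      by (rule pow_cong[OF l(1)]) (metis CA_cong mod_mult_left_eq mult_1 of_nat_mult)
    finally show ?thesis .
  qed
  show ?thesis unfolding cob_char
  proof (intro exI conjI allI)
    show "\<forall>x\<in>carrier G. h x \<noteq> 0" using hnz by blast
    fix x y
    show "cb n a m \<beta> x y = (if x \<in> carrier G \<and> y \<in> carrier G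
                      then h y * inverse (h (x \<otimes>\<^bsub>G\<^esub> y)) * h x else 1)"
    proof (cases "x \<in> carrier G \<and> y \<in> carrier G")
      case False then show ?thesis by (auto simp: cb_def)
    next
      case True
      obtain I e where x: "x = (int I, e)" "e = 0 \<or> e = 1" using carr_cases True by metis
      obtain J f' where y: "y = (int J, f')" "f' = 0 \<or> f' = 1" using carr_cases True by metis
      have hxy: "h (x \<otimes>\<^bsub>G\<^esub> y) * cb n a m \<beta> x y = h x * h y"
      proof (cases "e = 1")
        case False
        then have e0: "e = 0" using x by auto
        have "l ^ nat ((int I + int J) mod int n) = l ^ (I + J)" by (rule P) simp
        moreover have "f' mod 2 = f'" using y by auto
        ultimately show ?thesis using True e0 x y by (simp add: h_def cb_def multG Gnam_mult_def power_add)
      next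
        case e1: True
        show ?thesis
        proof (cases "f' = 1")
          case False
          then have f0: "f' = 0" using y by auto
          have "l ^ nat ((int I + a * int J) mod int n) = l ^ (I + AA * J)"
            by (rule P) (simp add: AA_int modL7)
          then show ?thesis using True e1 f0 x y key[of J]
            by (simp add: h_def cb_def multG Gnam_mult_def power_add mult_ac)
        next
          case f1: True
          have "l ^ nat ((int I + a * int J + m) mod int n) = l ^ (I + AA * J + MM)"
            by (rule P) (simp add: AA_int MM_int modL7 modL8 modL9 mod_simps)
          moreover have "\<beta> ^ J * (l ^ MM * l ^ (J * AA)) = \<nu> * (\<nu> * l ^ J)"
          proof -
            have "\<beta> ^ J * (l ^ MM * l ^ (J * AA)) = l ^ MM * (\<beta> ^ J * l ^ (AA * J))"
              by (simp add: mult_ac)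
            also have "\<dots> = \<nu> * (\<nu> * l ^ J)" using key[of J] nu by (simp add: power2_eq_square)
            finally show ?thesis .
          qed
          ultimately show ?thesis using True e1 f1 x y
            by (simp add: h_def cb_def multG Gnam_mult_def power_add mult_ac)
        qed
      qed
      have "cb n a m \<beta> x y = h y * inverse (h (x \<otimes>\<^bsub>G\<^esub> y)) * h x"
        using hxy hnz[of "x \<otimes>\<^bsub>G\<^esub> y"] by (simp add: field_simps)
      then show ?thesis using True by simp
    qed
  qed
qed

end


context gnam
begin

lemma cb_cob_conv:
  fixes \<beta> :: "'k::field"
  assumes b1: "\<beta> ^ n = 1" and cob: "cb n a m \<beta> \<in> coboundaries2 G"
  shows "\<beta> ^ (n div dd) = 1"
proof -
  obtain h where hnz: "\<forall>x\<in>carrier G. h x \<noteq> 0" and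
    hf: "\<And>x y. cb n a m \<beta> x y = (if x \<in> carrier G \<and> y \<in> carrier G
                      then h y * inverse (h (x \<otimes>\<^bsub>G\<^esub> y)) * h x else 1)"
    using cob unfolding cob_char by blast
  have c00: "(0::int, 0::int) \<in> carrier G" using n1 by (simp add: carrG)
  have h1: "h (0, 0) = 1"
  proof -
    have "cb n a m \<beta> (0, 0) (0, 0) = 1" by (simp add: cb_def)
    then have "h (0,0) * inverse (h (0,0)) * h (0,0) = 1" using hf[of "(0,0)" "(0,0)"] c00
      by (simp add: multG Gnam_mult_def)
    then show ?thesis using hnz c00 by simp
  qed
  define l where "l = h tt"
  have lnz: "l \<noteq> 0" using hnz tt_carr by (simp add: l_def)
  have hk: "h (int k mod int n, 0) = l ^ k" for k
  proof (induction k)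
    case 0 then show ?case using h1 by simp
  next
    case (Suc k)
    have c: "(int k mod int n, 0::int) \<in> carrier G" using n1 by (simp add: carrG)
    have prod: "(int k mod int n, 0::int) \<otimes>\<^bsub>G\<^esub> tt = (int (Suc k) mod int n, 0)"
      by (simp add: multG tt_def Gnam_mult_def mod_simps add.commute)
    have "cb n a m \<beta> (int k mod int n, 0) tt = 1" by (simp add: cb_def)
    then have "h tt * inverse (h (int (Suc k) mod int n, 0)) * h (int k mod int n, 0) = 1"
      using hf[of "(int k mod int n, 0)" tt] c tt_carr prod by simp
    moreover have "h (int (Suc k) mod int n, 0) \<noteq> 0" using hnz n1 by (simp add: carrG)
    ultimately show ?case using Suc by (simp add: l_def field_simps)
  qed
  have ln: "l ^ n = 1" using hk[of n] h1 by simp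
  have st: "ss \<otimes>\<^bsub>G\<^esub> tt = (a mod int n, 1)"
    by (simp add: multG ss_def tt_def Gnam_mult_def mod_mult_right_eq)
  have as: "(a mod int n, 0) \<otimes>\<^bsub>G\<^esub> ss = (a mod int n, 1)"
    by (simp add: multG ss_def Gnam_mult_def)
  have ca0: "(a mod int n, 0::int) \<in> carrier G" and ca1: "(a mod int n, 1::int) \<in> carrier G"
    using n1 by (simp_all add: carrG)
  have hA: "h (a mod int n, 0) = l ^ AA" using hk[of AA] by (simp add: AA_int)
  have e1: "\<beta> ^ nat (1 mod int n) = l * inverse (h (a mod int n, 1)) * h ss"
    using hf[of ss tt] st ss_carr tt_carr by (simp add: cb_def ss_def l_def mult_ac tt_def)
  have e2: "1 = h ss * inverse (h (a mod int n, 1)) * l ^ AA"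
    using hf[of "(a mod int n, 0)" ss] as ca0 ss_carr hA by (simp add: cb_def)
  have b11: "\<beta> ^ nat (1 mod int n) = \<beta>"
    using pow_cong[OF b1, of "nat (1 mod int n)" 1] n1 by simp
  have hs: "h ss \<noteq> 0" "h (a mod int n, 1) \<noteq> 0" using hnz ss_carr ca1 by auto
  have rel: "\<beta> * l ^ AA = l"
  proof -
    have "h (a mod int n, 1) = h ss * l ^ AA" using e2 hs by (simp add: field_simps)
    then show ?thesis using e1 b11 hs lnz by (simp add: field_simps)
  qed
  define N where "N = n div dd"
  have lAN: "l ^ (AA * N) = l ^ N"
  proof (rule pow_cong[OF ln])
    obtain q where q: "CC = dd * q" using dd_dvd by blast
    have nN: "int dd * int N = int n" using dd_N by (metis N_def of_nat_mult)
    have "int (AA * N) - int N = (int (CC + AA) - 1) * int N - int q * (int dd * int N)"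
      by (simp add: q algebra_simps)
    then have "int (AA * N) - int N = (int (CC + AA) - 1) * int N - int q * int n"
      by (simp only: nN)
    moreover have "int n dvd (int (CC + AA) - 1)" using CA_cong by (simp add: mod_eq_dvd_iff)
    ultimately have "int n dvd int (AA * N) - int N" by simp
    then show "int (AA * N) mod int n = int N mod int n" by (simp add: mod_eq_dvd_iff)
  qed
  have "\<beta> ^ N * l ^ N = l ^ N"
  proof -
    have "\<beta> ^ N * l ^ N = \<beta> ^ N * l ^ (AA * N)" by (simp add: lAN)
    also have "\<dots> = (\<beta> * l ^ AA) ^ N" by (simp add: power_mult_distrib power_mult)
    also have "\<dots> = l ^ N" by (simp add: rel)
    finally show ?thesis .
  qed
  then show ?thesis using lnz by (simp add: N_def)
qed

end





lemma pow_gcd1: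
  assumes "(b::'k::field) ^ p = 1" "b ^ q = 1"
  shows "b ^ (gcd p q) = 1"
proof (cases "p = 0")
  case True then show ?thesis using assms by simp
next
  case False
  obtain x y where xy: "p * x = q * y + gcd p q" using bezout_nat[OF False] by blast
  have "1 = (b ^ p) ^ x" using assms by simp
  also have "\<dots> = (b ^ q) ^ y * b ^ gcd p q" by (simp add: power_mult[symmetric] xy power_add)
  finally show ?thesis using assms by simp
qed

lemma pow_dvd1:
  assumes "(b::'k::field) ^ p = 1" "p dvd q"
  shows "b ^ q = 1"
  using assms by (auto simp: power_mult elim!: dvdE)

context gnam
begin

definition "dm = gcd (a - 1) (int n)"
definition "dp = gcd (a + 1) (int n)"
definition "NN = n div dd"

lemma dd_dm: "int dd = dm"
proof -
  have "int dd = gcd (int CC) (int n)" by (simp add: dd_def)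
  also have "\<dots> = gcd ((1 - a) mod int n) (int n)" by (simp only: CC_int)
  also have "\<dots> = gcd (int n) ((1 - a) mod int n)" by (rule gcd.commute)
  also have "\<dots> = gcd (1 - a) (int n)" by (rule gcd_red_int[symmetric])
  also have "\<dots> = gcd (- (a - 1)) (int n)" by simp
  also have "\<dots> = dm" by (simp only: gcd_neg1_int dm_def)
  finally show ?thesis .
qed

lemma dm_pos: "dm > 0" using dd_dm dd_pos by linarith
lemma dm_NN: "dm * int NN = int n" using dd_N dd_dm by (metis NN_def of_nat_mult)
lemma NN_pos: "NN \<ge> 1"
proof (rule ccontr)
  assume "\<not> NN \<ge> 1"
  then have "NN = 0" by simp
  then show False using dd_N n1 by (simp add: NN_def)
qed

lemma NN_aux: "\<exists>k. a - 1 = dm * k \<and> coprime (int NN) k"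
proof -
  have n0: "int n \<noteq> 0" using n1 by simp
  have "dm dvd a - 1" by (simp add: dm_def)
  then obtain k where k: "a - 1 = dm * k" by (rule dvdE)
  have cop: "coprime ((a - 1) div dm) (int n div dm)" unfolding dm_def
    by (rule div_gcd_coprime) (use n0 in simp)
  have kk: "(a - 1) div dm = k" using dm_pos by (simp add: k)
  have NNe: "int n div dm = int NN" using dm_pos by (simp add: dm_NN[symmetric])
  have "coprime k (int NN)" using cop by (simp only: kk NNe)
  then show ?thesis using k by (auto simp: coprime_commute)
qed

lemma NN_dvd: "int NN dvd a + 1" "int NN dvd m"
proof -
  obtain k where k: "a - 1 = dm * k" and cop2: "coprime (int NN) k" using NN_aux by blast
  have "int n dvd a ^ 2 - 1" using asq by (simp add: mod_eq_dvd_iff)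
  moreover have "a ^ 2 - 1 = dm * (k * (a + 1))"
  proof -
    have "a ^ 2 - 1 = (a - 1) * (a + 1)" by (simp add: power2_eq_square algebra_simps)
    then show ?thesis by (simp add: k)
  qed
  ultimately have "dm * int NN dvd dm * (k * (a + 1))" by (simp add: dm_NN)
  then have "int NN dvd k * (a + 1)" using dm_pos by simp
  then show "int NN dvd a + 1" using cop2 by (simp add: coprime_dvd_mult_right_iff)
  have "int n dvd (1 - a) * m" using am by (simp add: dvd_eq_mod_eq_0)
  moreover have "(1 - a) * m = dm * (k * (- m))"
  proof -
    have "(1 - a) * m = (a - 1) * (- m)" by (simp add: algebra_simps)
    then show ?thesis by (simp add: k)
  qed
  ultimately have "dm * int NN dvd dm * (k * (- m))" by (simp add: dm_NN)
  then have "int NN dvd k * (- m)" using dm_pos by simp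
  then have "int NN dvd - m" using cop2 by (simp add: coprime_dvd_mult_right_iff)
  then show "int NN dvd m" by simp
qed

lemma NN_dvd_dp: "int NN dvd dp"
proof -
  have "int NN dvd int n" unfolding dm_NN[symmetric] by simp
  then show ?thesis unfolding dp_def by (rule gcd_greatest[OF NN_dvd(1)])
qed

lemma dp_pos: "dp > 0" using n1 by (simp add: dp_def)

lemma dp_dvd_2NN: "dp dvd 2 * int NN"
proof -
  have g2: "gcd dm dp dvd 2"
  proof -
    have "dm dvd a - 1" "dp dvd a + 1" by (simp_all add: dm_def dp_def)
    then have "gcd dm dp dvd a - 1" "gcd dm dp dvd a + 1"
      using dvd_trans[OF gcd_dvd1[of dm dp]] dvd_trans[OF gcd_dvd2[of dm dp]] by blast+
    then have "gcd dm dp dvd (a + 1) - (a - 1)" by (rule dvd_diff[rotated])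
    then show ?thesis by simp
  qed
  have l: "lcm dm dp dvd int n" by (simp add: dm_def dp_def)
  have "dm * dp = gcd dm dp * lcm dm dp" using prod_gcd_lcm_int[of dm dp] dm_pos dp_pos by simp
  also have "\<dots> dvd 2 * int n" using g2 l by (rule mult_dvd_mono)
  finally have "dm * dp dvd dm * (2 * int NN)" using dm_NN by (simp add: algebra_simps)
  then show ?thesis using dm_pos by simp
qed

lemma SucAA_gcd: "int (gcd (Suc AA) n) = dp"
proof -
  have "int (gcd (Suc AA) n) = gcd (int (Suc AA)) (int n)" by (rule gcd_int_int_eq[symmetric])
  also have "\<dots> = gcd (1 + a mod int n) (int n)" by (simp add: AA_int[symmetric])
  also have "\<dots> = gcd (int n) ((1 + a mod int n) mod int n)" by (simp add: gcd.commute gcd_red_int[symmetric])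
  also have "(1 + a mod int n) mod int n = (a + 1) mod int n" by (simp add: mod_simps add.commute)
  also have "gcd (int n) ((a + 1) mod int n) = dp" by (simp add: dp_def gcd.commute gcd_red_int[symmetric])
  finally show ?thesis .
qed

lemma dp_exp:
  fixes \<beta> :: "'k::field"
  assumes "\<beta> ^ n = 1" "\<beta> ^ Suc AA = 1"
  shows "\<beta> ^ nat dp = 1"
proof -
  have "nat dp = gcd (Suc AA) n" by (simp add: SucAA_gcd[symmetric])
  then show ?thesis using pow_gcd1[OF assms(2) assms(1)] by simp
qed

end


context gnam
begin

lemma decomp_any:
  fixes f :: "int \<times> int \<Rightarrow> int \<times> int \<Rightarrow> 'k::field"
  assumes roots: "\<And>(c::'k) d. d \<ge> 1 \<Longrightarrow> \<exists>x. x ^ d = c"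
    and f: "f \<in> cocycles2 G"
  shows "\<exists>\<beta>::'k. \<beta> ^ n = 1 \<and> \<beta> ^ Suc AA = 1 \<and> \<beta> ^ MM = 1 \<and>
   (\<exists>b\<in>coboundaries2 G. f = (\<lambda>x y. b x y * cb n a m \<beta> x y))"
proof -
  have "gnam_ext n a m f"
    by (rule gnam_ext.intro[OF gnam_axioms], rule gnam_ext_axioms.intro[OF f roots])
  then show ?thesis by (rule gnam_ext.main_decomp)
qed

lemma H2_trivial_gen:
  assumes roots: "\<And>(c::'k::field) d. d \<ge> 1 \<Longrightarrow> \<exists>x. x ^ d = c"
    and hyp: "\<And>\<beta>::'k. \<beta> ^ n = 1 \<Longrightarrow> \<beta> ^ Suc AA = 1 \<Longrightarrow> \<beta> ^ MM = 1 \<Longrightarrow> \<beta> ^ NN = 1"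
  shows "trivial_group (H2 G TYPE('k))"
proof -
  interpret CG: comm_group "cocycle_group G :: (int \<times> int \<Rightarrow> int \<times> int \<Rightarrow> 'k) monoid"
    by (rule comm_group_cg)
  have sub: "subgroup (coboundaries2 G) (cocycle_group G :: (int \<times> int \<Rightarrow> int \<times> int \<Rightarrow> 'k) monoid)"
    by (rule subgroup_cob[OF groupG])
  have inB: "f \<in> coboundaries2 G" if f: "(f :: int \<times> int \<Rightarrow> int \<times> int \<Rightarrow> 'k) \<in> cocycles2 G" for f
  proof -
    obtain \<beta> :: 'k and b where bb: "\<beta> ^ n = 1" "\<beta> ^ Suc AA = 1" "\<beta> ^ MM = 1"
      and b: "b \<in> coboundaries2 G" and fb: "f = (\<lambda>x y. b x y * cb n a m \<beta> x y)"
      using decomp_any[OF roots f] by blast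
    have "\<beta> ^ NN = 1" using hyp bb by blast
    then have "cb n a m \<beta> \<in> coboundaries2 G"
      by (intro cb_cob[OF roots]) (unfold NN_def[symmetric])
    then have "b \<otimes>\<^bsub>cocycle_group G\<^esub> cb n a m \<beta> \<in> coboundaries2 G"
      by (rule subgroup.m_closed[OF sub b])
    then show ?thesis by (simp add: fb mult_cg)
  qed
  have "carrier (H2 G TYPE('k)) = {coboundaries2 G}"
  proof -
    have "carrier (H2 G TYPE('k)) = (\<lambda>x. r_coset (cocycle_group G) (coboundaries2 G) x) ` carrier (cocycle_group G :: (int \<times> int \<Rightarrow> int \<times> int \<Rightarrow> 'k) monoid)"
      by (simp add: H2_def carrier_FactGroup)
    also have "\<dots> = {coboundaries2 G}"
    proof -
      have "coboundaries2 G #>\<^bsub>cocycle_group G\<^esub> x = coboundaries2 G" if "x \<in> carrier (cocycle_group G :: (int \<times> int \<Rightarrow> int \<times> int \<Rightarrow> 'k) monoid)" for x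
        using that sub inB[of x] by (simp add: CG.coset_join2 carrier_cg)
      moreover have "carrier (cocycle_group G :: (int \<times> int \<Rightarrow> int \<times> int \<Rightarrow> 'k) monoid) \<noteq> {}" by auto
      ultimately show ?thesis by auto
    qed
    finally show ?thesis .
  qed
  then show ?thesis unfolding trivial_group_def using group_H2[OF groupG]
    by (simp add: H2_def)
qed

end


context gnam
begin

lemma H2_Z2_gen:
  fixes \<beta>0 :: "'k::field"
  assumes roots: "\<And>(c::'k::field) d. d \<ge> 1 \<Longrightarrow> \<exists>x. x ^ d = c"
    and two: "(2::'k) \<noteq> 0"
    and b0: "\<beta>0 ^ n = 1" "\<beta>0 ^ Suc AA = 1" "\<beta>0 ^ MM = 1" "\<beta>0 ^ NN = -1"
    and hyp: "\<And>\<beta>::'k. \<beta> ^ n = 1 \<Longrightarrow> \<beta> ^ Suc AA = 1 \<Longrightarrow> \<beta> ^ MM = 1 \<Longrightarrow> \<beta> ^ NN = 1 \<or> \<beta> ^ NN = -1"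
  shows "H2 G TYPE('k) \<cong> integer_mod_group 2"
proof -
  define CG where "CG = (cocycle_group G :: (int \<times> int \<Rightarrow> int \<times> int \<Rightarrow> 'k) monoid)"
  define B where "B = (coboundaries2 G :: (int \<times> int \<Rightarrow> int \<times> int \<Rightarrow> 'k) set)"
  interpret CG: comm_group CG unfolding CG_def by (rule comm_group_cg)
  have sub: "subgroup B CG" unfolding B_def CG_def by (rule subgroup_cob[OF groupG])
  interpret N: normal B CG using sub by (rule CG.subgroup_imp_normal)
  have H2eq: "H2 G TYPE('k) = CG Mod B" by (simp add: H2_def CG_def B_def)
  have m1: "-1 \<noteq> (1::'k)"
  proof
    assume h: "-1 = (1::'k)"
    have "(2::'k) = 1 + 1" by simp
    also have "\<dots> = 1 + -1" using h by simp
    also have "\<dots> = 0" by simp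
    finally show False using two by simp
  qed
  define c0 where "c0 = cb n a m \<beta>0"
  have b0nz: "\<beta>0 \<noteq> 0" using b0(1) n1 by (metis one_neq_zero zero_power less_le_trans zero_less_one)
  have c0C: "c0 \<in> carrier CG" using cb_coc[OF b0(1-3)] by (simp add: c0_def CG_def carrier_cg)
  have c0B: "c0 \<notin> B"
  proof
    assume "c0 \<in> B"
    then have "\<beta>0 ^ (n div dd) = 1" using cb_cob_conv[OF b0(1)] by (simp add: c0_def B_def)
    then show False using b0(4) m1 by (simp add: NN_def)
  qed
  have c00: "c0 \<otimes>\<^bsub>CG\<^esub> c0 \<in> B"
  proof -
    have "(\<beta>0 * \<beta>0) ^ NN = 1" using b0(4) by (simp add: power_mult_distrib)
    then have "cb n a m (\<beta>0 * \<beta>0) \<in> B" unfolding B_def by (intro cb_cob[OF roots]) (unfold NN_def[symmetric])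
    then show ?thesis by (simp add: CG_def mult_cg c0_def cb_mult)
  qed
  have cls: "f \<in> B \<or> f \<in> B #>\<^bsub>CG\<^esub> c0" if f: "f \<in> carrier CG" for f
  proof -
    obtain \<beta> :: 'k and b where bb: "\<beta> ^ n = 1" "\<beta> ^ Suc AA = 1" "\<beta> ^ MM = 1"
      and b: "b \<in> B" and fb: "f = (\<lambda>x y. b x y * cb n a m \<beta> x y)"
      using decomp_any[OF roots, of f] f by (auto simp: CG_def carrier_cg B_def)
    have bC: "b \<in> carrier CG" using b sub by (simp add: subgroup.mem_carrier)
    show ?thesis
    proof (cases "\<beta> ^ NN = 1")
      case True
      then have "cb n a m \<beta> \<in> B" unfolding B_def by (intro cb_cob[OF roots]) (unfold NN_def[symmetric])
      then have "b \<otimes>\<^bsub>CG\<^esub> cb n a m \<beta> \<in> B" by (rule subgroup.m_closed[OF sub b])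
      then show ?thesis by (simp add: fb CG_def mult_cg)
    next
      case False
      then have bN: "\<beta> ^ NN = -1" using hyp bb by blast
      define \<gamma> where "\<gamma> = \<beta> / \<beta>0"
      have "\<gamma> ^ NN = 1" using bN b0(4) b0nz by (simp add: \<gamma>_def power_divide)
      then have gB: "cb n a m \<gamma> \<in> B" unfolding B_def by (intro cb_cob[OF roots]) (unfold NN_def[symmetric])
      have "cb n a m \<beta> = cb n a m \<gamma> \<otimes>\<^bsub>CG\<^esub> c0"
        using b0nz by (simp add: CG_def mult_cg c0_def cb_mult \<gamma>_def)
      then have "f = (b \<otimes>\<^bsub>CG\<^esub> cb n a m \<gamma>) \<otimes>\<^bsub>CG\<^esub> c0"
        by (simp add: fb CG_def mult_cg mult.assoc)
      moreover have "b \<otimes>\<^bsub>CG\<^esub> cb n a m \<gamma> \<in> B" by (rule subgroup.m_closed[OF sub b gB])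
      ultimately have "f \<in> B #>\<^bsub>CG\<^esub> c0" using c0C sub by (simp add: CG.rcosI subgroup.subset)
      then show ?thesis by blast
    qed
  qed
  have BB: "B #>\<^bsub>CG\<^esub> \<one>\<^bsub>CG\<^esub> = B" using sub by (simp add: subgroup.subset)
  define \<psi> where "\<psi> k = (if k = (0::int) then B else B #>\<^bsub>CG\<^esub> c0)" for k
  have carrH: "carrier (CG Mod B) = {B, B #>\<^bsub>CG\<^esub> c0}"
  proof
    show "carrier (CG Mod B) \<subseteq> {B, B #>\<^bsub>CG\<^esub> c0}"
    proof
      fix Y0 assume "Y0 \<in> carrier (CG Mod B)"
      then obtain f where f: "f \<in> carrier CG" and X: "Y0 = B #>\<^bsub>CG\<^esub> f"
        by (auto simp: carrier_FactGroup)
      from cls[OF f] show "Y0 \<in> {B, B #>\<^bsub>CG\<^esub> c0}"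
      proof
        assume "f \<in> B" then show ?thesis using X f sub by (simp add: CG.coset_join2)
      next
        assume "f \<in> B #>\<^bsub>CG\<^esub> c0"
        then have "B #>\<^bsub>CG\<^esub> c0 = B #>\<^bsub>CG\<^esub> f" using CG.repr_independence c0C sub by blast
        then show ?thesis using X by simp
      qed
    qed
    show "{B, B #>\<^bsub>CG\<^esub> c0} \<subseteq> carrier (CG Mod B)"
      using c0C BB by (auto simp: carrier_FactGroup intro: image_eqI[of _ _ "\<one>\<^bsub>CG\<^esub>"])
  qed
  have neq: "B \<noteq> B #>\<^bsub>CG\<^esub> c0" using CG.rcos_self[OF c0C sub] c0B by auto
  have "\<psi> \<in> iso (integer_mod_group 2) (CG Mod B)"
  proof -
    have carrZ: "carrier (integer_mod_group 2) = {0, 1}" by (auto simp: carrier_integer_mod_group)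
    have hom: "\<psi> \<in> hom (integer_mod_group 2) (CG Mod B)"
    proof (rule homI)
      fix x assume "x \<in> carrier (integer_mod_group 2)"
      then show "\<psi> x \<in> carrier (CG Mod B)" using carrH by (auto simp: \<psi>_def)
    next
      fix x y assume "x \<in> carrier (integer_mod_group 2)" "y \<in> carrier (integer_mod_group 2)"
      then have xy: "x \<in> {0, 1}" "y \<in> {0, 1}" using carrZ by auto
      have s1: "B <#>\<^bsub>CG\<^esub> B = B" using N.rcos_sum[of "\<one>\<^bsub>CG\<^esub>" "\<one>\<^bsub>CG\<^esub>"] BB by simp
      have s2: "B <#>\<^bsub>CG\<^esub> (B #>\<^bsub>CG\<^esub> c0) = B #>\<^bsub>CG\<^esub> c0"
        using N.rcos_sum[of "\<one>\<^bsub>CG\<^esub>" c0] BB c0C by simp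
      have s3: "(B #>\<^bsub>CG\<^esub> c0) <#>\<^bsub>CG\<^esub> B = B #>\<^bsub>CG\<^esub> c0"
        using N.rcos_sum[of c0 "\<one>\<^bsub>CG\<^esub>"] BB c0C by simp
      have s4: "(B #>\<^bsub>CG\<^esub> c0) <#>\<^bsub>CG\<^esub> (B #>\<^bsub>CG\<^esub> c0) = B"
        using N.rcos_sum[of c0 c0] c0C c00 sub by (simp add: CG.coset_join2)
      show "\<psi> (x \<otimes>\<^bsub>integer_mod_group 2\<^esub> y) = \<psi> x \<otimes>\<^bsub>CG Mod B\<^esub> \<psi> y"
        using xy s1 s2 s3 s4 by (auto simp: \<psi>_def)
    qed
    have "bij_betw \<psi> {0, 1} {B, B #>\<^bsub>CG\<^esub> c0}"
      using neq by (auto simp: bij_betw_def \<psi>_def inj_on_def)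
    then show ?thesis using hom carrZ carrH by (simp add: iso_def)
  qed
  then have "integer_mod_group 2 \<cong> CG Mod B" by (auto simp: is_iso_def)
  then have "CG Mod B \<cong> integer_mod_group 2" by (rule group.iso_sym[OF group_integer_mod_group])
  then show ?thesis by (simp add: H2eq)
qed

end


context gnam
begin

lemma dp_dvd_n: "dp dvd int n" by (simp add: dp_def)

lemma dp_dvd_SucAA: "dp dvd int (Suc AA)"
proof -
  have e: "int (Suc AA) = (a + 1) - int n * (a div int n)"
    by (simp add: AA_int algebra_simps minus_div_mult_eq_mod[symmetric])
  have "dp dvd a + 1" by (simp add: dp_def)
  moreover have "dp dvd int n * (a div int n)" using dp_dvd_n by simp
  ultimately have "dp dvd (a + 1) - int n * (a div int n)" by (rule dvd_diff)
  then show ?thesis by (simp only: e)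
qed

lemma dvd_MM: "d dvd m \<Longrightarrow> d dvd int n \<Longrightarrow> d dvd int MM"
proof -
  assume "d dvd m" "d dvd int n"
  moreover have "int MM = m - int n * (m div int n)"
    by (simp add: MM_int algebra_simps minus_div_mult_eq_mod[symmetric])
  ultimately show ?thesis by simp
qed

lemma nat_dvd_from_int: "dp dvd int k \<Longrightarrow> nat dp dvd k"
  using dp_pos by (metis int_dvd_int_iff int_nat_eq less_le)

lemma triv_hyp:
  fixes \<beta> :: "'k::field"
  assumes cse: "dm * dp = int n \<or> \<not> dp dvd m"
    and bb: "\<beta> ^ n = 1" "\<beta> ^ Suc AA = 1" "\<beta> ^ MM = 1"
  shows "\<beta> ^ NN = 1"
proof -
  have bdp: "\<beta> ^ nat dp = 1" using dp_exp bb by blast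
  show ?thesis
  proof (cases "dm * dp = int n")
    case True
    then have "dm * dp = dm * int NN" using dm_NN by simp
    then have "dp = int NN" using dm_pos by simp
    then have "nat dp = NN" by simp
    then show ?thesis using bdp by simp
  next
    case False
    then have ndvd: "\<not> dp dvd m" using cse by blast
    define g where "g = gcd MM (nat dp)"
    have bg: "\<beta> ^ g = 1" unfolding g_def by (rule pow_gcd1[OF bb(3) bdp])
    have "int g = gcd (int MM) (int (nat dp))" unfolding g_def by (rule gcd_int_int_eq[symmetric])
    then have gi: "int g = gcd (int MM) dp" using dp_pos by simp
    have NNn: "int NN dvd int n" unfolding dm_NN[symmetric] by simp
    have "int NN dvd int MM" by (rule dvd_MM[OF NN_dvd(2) NNn])
    then have "int NN dvd int g" using NN_dvd_dp by (simp add: gi)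
    then obtain k where k: "int g = int NN * k" by (rule dvdE)
    have gpos: "int g > 0" using dp_pos gi by simp
    have NNp: "int NN > 0" using NN_pos by simp
    have kpos: "k > 0" using gpos NNp k by (simp add: zero_less_mult_iff)
    have "int g dvd dp" by (simp add: gi)
    then have "int NN * k dvd int NN * 2" using dp_dvd_2NN k by (metis dvd_trans mult.commute)
    then have "k dvd 2" using NNp by simp
    then have "k \<le> 2" by (simp add: zdvd_imp_le)
    then have k12: "k = 1 \<or> k = 2" using kpos by linarith
    show ?thesis
    proof (cases "k = 1")
      case True
      then have "g = NN" using k by simp
      then show ?thesis using bg by simp
    next
      case False
      then have "int g = 2 * int NN" using k k12 by simp
      then have "dp dvd int g" using dp_dvd_2NN by simp
      then have "dp dvd int MM" using gi by (metis dvd_trans gcd_dvd1)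
      moreover have "int MM = m - int n * (m div int n)"
        by (simp add: MM_int algebra_simps minus_div_mult_eq_mod[symmetric])
      ultimately have "dp dvd m" using dp_dvd_n
        by (metis dvd_add dvd_mult2 diff_add_cancel)
      then show ?thesis using ndvd by blast
    qed
  qed
qed

lemma z2_hyp:
  fixes \<beta> :: "'k::field"
  assumes cse: "dm * dp = 2 * int n"
    and bb: "\<beta> ^ n = 1" "\<beta> ^ Suc AA = 1"
  shows "\<beta> ^ NN = 1 \<or> \<beta> ^ NN = -1"
proof -
  have bdp: "\<beta> ^ nat dp = 1" using dp_exp bb by blast
  have "dm * dp = dm * (2 * int NN)" using cse dm_NN by (simp add: algebra_simps)
  then have "dp = 2 * int NN" using dm_pos by simp
  then have "nat dp = 2 * NN" by simp
  then have "(\<beta> ^ NN) ^ 2 = 1" using bdp by (simp add: power_mult[symmetric] mult.commute)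
  then show ?thesis by (simp add: power2_eq_1_iff)
qed

lemma z2_b0:
  assumes roots: "\<And>(c::'k::field) d. d \<ge> 1 \<Longrightarrow> \<exists>x. x ^ d = c"
    and cse: "dm * dp = 2 * int n" and dvm: "dp dvd m"
  shows "\<exists>\<beta>0::'k. \<beta>0 ^ n = 1 \<and> \<beta>0 ^ Suc AA = 1 \<and> \<beta>0 ^ MM = 1 \<and> \<beta>0 ^ NN = -1"
proof -
  obtain \<beta>0 :: 'k where b: "\<beta>0 ^ NN = -1" using roots NN_pos by blast
  have "dm * dp = dm * (2 * int NN)" using cse dm_NN by (simp add: algebra_simps)
  then have "dp = 2 * int NN" using dm_pos by simp
  then have "nat dp = 2 * NN" by simp
  then have "\<beta>0 ^ nat dp = (\<beta>0 ^ NN) ^ 2" by (simp add: power_mult[symmetric] mult.commute)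
  then have bdp: "\<beta>0 ^ nat dp = 1" using b by simp
  have "\<beta>0 ^ n = 1" by (rule pow_dvd1[OF bdp nat_dvd_from_int]) (simp add: dp_dvd_n)
  moreover have "\<beta>0 ^ Suc AA = 1" by (rule pow_dvd1[OF bdp nat_dvd_from_int[OF dp_dvd_SucAA]])
  moreover have "\<beta>0 ^ MM = 1" by (rule pow_dvd1[OF bdp nat_dvd_from_int[OF dvd_MM[OF dvm dp_dvd_n]]])
  ultimately show ?thesis using b by blast
qed

end


context gnam
begin

lemma split_iso:
  assumes dvm: "dp dvd m"
  shows "Gnam n a m \<cong> Gnam n a 0"
proof -
  obtain u v where uv: "u * (a + 1) + v * int n = dp" using bezout_int[of "a + 1" "int n"] by (auto simp: dp_def)
  obtain q where q: "m = dp * q" using dvm by (rule dvdE)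
  define j where "j = - u * q"
  have jrel: "int n dvd (1 + a) * j + m"
  proof -
    have e1: "(1 + a) * j + m = q * (dp - u * (a + 1))" by (simp add: j_def q algebra_simps)
    have e2: "dp - u * (a + 1) = v * int n" using uv by linarith
    have "(1 + a) * j + m = int n * (v * q)" using e1 e2 by simp
    then show ?thesis by simp
  qed
  define \<phi> where "\<phi> x = ((fst x - snd x * j) mod int n, snd x)" for x :: "int \<times> int"
  define \<psi> where "\<psi> x = ((fst x + snd x * j) mod int n, snd x)" for x :: "int \<times> int"
  have c0: "carrier (Gnam n a 0) = carrier G" by (simp add: Gnam_def)
  have m0: "x \<otimes>\<^bsub>Gnam n a 0\<^esub> y = Gnam_mult n a 0 x y" for x y by (simp add: Gnam_def)
  have hom: "\<phi> \<in> hom G (Gnam n a 0)"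
  proof (rule homI)
    fix x assume "x \<in> carrier G"
    then show "\<phi> x \<in> carrier (Gnam n a 0)" using n1 by (auto simp: c0 carrG \<phi>_def)
  next
    fix x y assume xy: "x \<in> carrier G" "y \<in> carrier G"
    obtain i e where x: "x = (i, e)" "e = 0 \<or> e = 1" using xy(1) by (cases x) (auto simp: carrG)
    obtain k f where y: "y = (k, f)" "f = 0 \<or> f = 1" using xy(2) by (cases y) (auto simp: carrG)
    have C11: "(i + a * k + m) mod int n = (i - j + a * (k - j)) mod int n"
    proof -
      have d: "(i + a * k + m) - (i - j + a * (k - j)) = (1 + a) * j + m" by (simp add: algebra_simps)
      show ?thesis unfolding mod_eq_dvd_iff d by (rule jrel)
    qed
    show "\<phi> (x \<otimes>\<^bsub>G\<^esub> y) = \<phi> x \<otimes>\<^bsub>Gnam n a 0\<^esub> \<phi> y"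
      using x(2) y(2) unfolding x y
      by (elim disjE; simp add: \<phi>_def multG m0 Gnam_mult_def mod_simps modL1 modL3 modL5 modL6 modL7 modL8 modL9 C11; simp add: algebra_simps)
  qed
  have bij: "bij_betw \<phi> (carrier G) (carrier (Gnam n a 0))"
  proof (rule bij_betw_byWitness[where f' = \<psi>])
    show "\<forall>x\<in>carrier G. \<psi> (\<phi> x) = x"
      by (auto simp: carrG \<phi>_def \<psi>_def mod_simps)
    show "\<forall>x\<in>carrier (Gnam n a 0). \<phi> (\<psi> x) = x"
      by (auto simp: c0 carrG \<phi>_def \<psi>_def mod_simps)
    show "\<phi> ` carrier G \<subseteq> carrier (Gnam n a 0)" using n1 by (auto simp: c0 carrG \<phi>_def)
    show "\<psi> ` carrier (Gnam n a 0) \<subseteq> carrier G" using n1 by (auto simp: c0 carrG \<psi>_def)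
  qed
  show ?thesis using hom bij by (auto simp: is_iso_def iso_def)
qed

end


lemma cob_transport:
  fixes G :: "('g, 'b) monoid_scheme" and H :: "('h, 'c) monoid_scheme"
  assumes grpG: "group G" and grpH: "group H" and iso: "\<phi> \<in> iso G H"
    and allG: "\<And>f :: 'g \<Rightarrow> 'g \<Rightarrow> 'k::field. f \<in> cocycles2 G \<Longrightarrow> f \<in> coboundaries2 G"
    and f': "(f' :: 'h \<Rightarrow> 'h \<Rightarrow> 'k) \<in> cocycles2 H"
  shows "f' \<in> coboundaries2 H"
proof -
  interpret G: group G by (rule grpG)
  interpret H: group H by (rule grpH)
  have hom: "\<phi> \<in> hom G H" and bij: "bij_betw \<phi> (carrier G) (carrier H)" using iso by (auto simp: iso_def)
  have phiC: "\<phi> x \<in> carrier H" if "x \<in> carrier G" for x using hom that by (auto simp: hom_def)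
  have phiM: "\<phi> (x \<otimes>\<^bsub>G\<^esub> y) = \<phi> x \<otimes>\<^bsub>H\<^esub> \<phi> y" if "x \<in> carrier G" "y \<in> carrier G" for x y
    using hom that by (auto simp: hom_def)
  define f where "f x y = (if x \<in> carrier G \<and> y \<in> carrier G then f' (\<phi> x) (\<phi> y) else 1)" for x y
  have fc: "f \<in> cocycles2 G"
  proof (rule cocyclesI)
    fix x y assume "x \<in> carrier G" "y \<in> carrier G"
    then show "f x y \<noteq> 0" using cocyclesD(1)[OF f'] phiC by (simp add: f_def)
  next
    fix x y assume "x \<notin> carrier G \<or> y \<notin> carrier G"
    then show "f x y = 1" by (auto simp: f_def)
  next
    fix x y z assume xyz: "x \<in> carrier G" "y \<in> carrier G" "z \<in> carrier G"
    then show "f y z * f x (y \<otimes>\<^bsub>G\<^esub> z) = f (x \<otimes>\<^bsub>G\<^esub> y) z * f x y"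
      using cocyclesD(3)[OF f' phiC[OF xyz(1)] phiC[OF xyz(2)] phiC[OF xyz(3)]]
      by (simp add: f_def phiM)
  qed
  obtain h where hnz: "\<forall>x\<in>carrier G. h x \<noteq> 0" and
    hf: "\<And>x y. f x y = (if x \<in> carrier G \<and> y \<in> carrier G
                      then h y * inverse (h (x \<otimes>\<^bsub>G\<^esub> y)) * h x else 1)"
    using allG[OF fc] unfolding cob_char by blast
  define \<psi> where "\<psi> = inv_into (carrier G) \<phi>"
  have psiC: "\<psi> u \<in> carrier G" if "u \<in> carrier H" for u
    using that bij by (simp add: \<psi>_def bij_betw_def inv_into_into)
  have phipsi: "\<phi> (\<psi> u) = u" if "u \<in> carrier H" for u
    using that bij by (simp add: \<psi>_def bij_betw_def f_inv_into_f)
  have psiM: "\<psi> (u \<otimes>\<^bsub>H\<^esub> v) = \<psi> u \<otimes>\<^bsub>G\<^esub> \<psi> v" if "u \<in> carrier H" "v \<in> carrier H" for u v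
  proof -
    have "\<phi> (\<psi> u \<otimes>\<^bsub>G\<^esub> \<psi> v) = u \<otimes>\<^bsub>H\<^esub> v" using that by (simp add: phiM psiC phipsi)
    then have "\<psi> (u \<otimes>\<^bsub>H\<^esub> v) = \<psi> (\<phi> (\<psi> u \<otimes>\<^bsub>G\<^esub> \<psi> v))" by simp
    also have "\<dots> = \<psi> u \<otimes>\<^bsub>G\<^esub> \<psi> v"
      using bij that psiC by (simp add: \<psi>_def bij_betw_def inv_into_f_f)
    finally show ?thesis .
  qed
  show ?thesis unfolding cob_char
  proof (intro exI conjI allI)
    show "\<forall>x\<in>carrier H. h (\<psi> x) \<noteq> 0" using hnz psiC by blast
    fix u v
    show "f' u v = (if u \<in> carrier H \<and> v \<in> carrier H
                      then h (\<psi> v) * inverse (h (\<psi> (u \<otimes>\<^bsub>H\<^esub> v))) * h (\<psi> u) else 1)"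
    proof (cases "u \<in> carrier H \<and> v \<in> carrier H")
      case True
      have "f' u v = f (\<psi> u) (\<psi> v)" using True psiC phipsi by (simp add: f_def)
      also have "\<dots> = h (\<psi> v) * inverse (h (\<psi> (u \<otimes>\<^bsub>H\<^esub> v))) * h (\<psi> u)"
        using True psiC hf[of "\<psi> u" "\<psi> v"] by (simp add: psiM)
      finally show ?thesis using True by simp
    next
      case False
      then show ?thesis using cocyclesD(2)[OF f'] by auto
    qed
  qed
qed

context gnam
begin

lemma all_cob_gen:
  fixes f :: "int \<times> int \<Rightarrow> int \<times> int \<Rightarrow> 'k::field"
  assumes roots: "\<And>(c::'k::field) d. d \<ge> 1 \<Longrightarrow> \<exists>x. x ^ d = c"
    and hyp: "\<And>\<beta>::'k. \<beta> ^ n = 1 \<Longrightarrow> \<beta> ^ Suc AA = 1 \<Longrightarrow> \<beta> ^ MM = 1 \<Longrightarrow> \<beta> ^ NN = 1"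
    and f: "f \<in> cocycles2 G"
  shows "f \<in> coboundaries2 G"
proof -
  have sub: "subgroup (coboundaries2 G) (cocycle_group G :: (int \<times> int \<Rightarrow> int \<times> int \<Rightarrow> 'k) monoid)"
    by (rule subgroup_cob[OF groupG])
  obtain \<beta> :: 'k and b where bb: "\<beta> ^ n = 1" "\<beta> ^ Suc AA = 1" "\<beta> ^ MM = 1"
    and b: "b \<in> coboundaries2 G" and fb: "f = (\<lambda>x y. b x y * cb n a m \<beta> x y)"
    using decomp_any[OF roots f] by blast
  have "\<beta> ^ NN = 1" using hyp bb by blast
  then have "cb n a m \<beta> \<in> coboundaries2 G"
    by (intro cb_cob[OF roots]) (unfold NN_def[symmetric])
  then have "b \<otimes>\<^bsub>cocycle_group G\<^esub> cb n a m \<beta> \<in> coboundaries2 G"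
    by (rule subgroup.m_closed[OF sub b])
  then show ?thesis by (simp add: fb mult_cg)
qed

lemma exists_noncob:
  assumes roots: "\<And>(c::'k::field) d. d \<ge> 1 \<Longrightarrow> \<exists>x. x ^ d = c"
    and two: "(2::'k) \<noteq> 0"
    and cse: "dm * dp = 2 * int n" and dvm: "dp dvd m"
  shows "\<exists>c :: int \<times> int \<Rightarrow> int \<times> int \<Rightarrow> 'k. c \<in> cocycles2 G \<and> c \<notin> coboundaries2 G"
proof -
  obtain \<beta>0 :: 'k where b0: "\<beta>0 ^ n = 1" "\<beta>0 ^ Suc AA = 1" "\<beta>0 ^ MM = 1" "\<beta>0 ^ NN = -1"
    using z2_b0[OF roots cse dvm] by blast
  have m1: "-1 \<noteq> (1::'k)"
  proof
    assume h: "-1 = (1::'k)"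
    have "(2::'k) = 1 + 1" by simp
    also have "\<dots> = 1 + -1" using h by simp
    also have "\<dots> = 0" by simp
    finally show False using two by simp
  qed
  have "cb n a m \<beta>0 \<notin> coboundaries2 G"
  proof
    assume "cb n a m \<beta>0 \<in> coboundaries2 G"
    then have "\<beta>0 ^ (n div dd) = 1" using cb_cob_conv[OF b0(1)] by simp
    then show False using b0(4) m1 by (simp add: NN_def)
  qed
  then show ?thesis using cb_coc[OF b0(1-3)] by blast
qed

end


theorem proposition4p13:
  fixes n :: nat and a m :: int
  assumes "alg_closed TYPE('k::field)"
    and "n \<ge> 1"
    and "of_nat (2 * n) \<noteq> (0::'k)"
    and "a ^ 2 mod int n = 1 mod int n"
    and "((1 - a) * m) mod int n = 0"
  shows "(gcd (a - 1) (int n) * gcd (a + 1) (int n) = int n \<or> \<not> Gnam_split n a m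
           \<longrightarrow> trivial_group (H2 (Gnam n a m) TYPE('k)))
       \<and> (gcd (a - 1) (int n) * gcd (a + 1) (int n) = 2 * int n \<and> Gnam_split n a m
           \<longrightarrow> H2 (Gnam n a m) TYPE('k) \<cong> integer_mod_group 2)"
proof -
  interpret gnam n a m by (rule gnam.intro) (use assms in auto)
  have roots: "\<And>(c::'k) d. d \<ge> 1 \<Longrightarrow> \<exists>x. x ^ d = c" using root_exists assms(1) by blast
  have two: "(2::'k) \<noteq> 0"
  proof
    assume "(2::'k) = 0"
    then have "of_nat (2 * n) = (0::'k)" by (simp add: of_nat_mult)
    with assms(3) show False by simp
  qed
  show ?thesis
  proof (intro conjI impI)
    assume h: "gcd (a - 1) (int n) * gcd (a + 1) (int n) = int n \<or> \<not> Gnam_split n a m"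
    have c: "dm * dp = int n \<or> \<not> dp dvd m"
      using h split_iso by (auto simp: dm_def dp_def Gnam_split_def)
    have hyp: "\<And>\<beta>::'k. \<beta> ^ n = 1 \<Longrightarrow> \<beta> ^ Suc AA = 1 \<Longrightarrow> \<beta> ^ MM = 1 \<Longrightarrow> \<beta> ^ NN = 1"
      using triv_hyp[OF c] by blast
    show "trivial_group (H2 (Gnam n a m) TYPE('k))" by (rule H2_trivial_gen[OF roots hyp])
  next
    assume h: "gcd (a - 1) (int n) * gcd (a + 1) (int n) = 2 * int n \<and> Gnam_split n a m"
    have cse: "dm * dp = 2 * int n" using h by (simp add: dm_def dp_def)
    show "H2 (Gnam n a m) TYPE('k) \<cong> integer_mod_group 2"
    proof (cases "dp dvd m")
      case True
      obtain \<beta>0 :: 'k where b0: "\<beta>0 ^ n = 1" "\<beta>0 ^ Suc AA = 1" "\<beta>0 ^ MM = 1" "\<beta>0 ^ NN = -1"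
        using z2_b0[OF roots cse True] by blast
      have hyp: "\<And>\<beta>::'k. \<beta> ^ n = 1 \<Longrightarrow> \<beta> ^ Suc AA = 1 \<Longrightarrow> \<beta> ^ MM = 1 \<Longrightarrow> \<beta> ^ NN = 1 \<or> \<beta> ^ NN = -1"
        using z2_hyp[OF cse] by blast
      show ?thesis by (rule H2_Z2_gen[OF roots two b0 hyp])
    next
      case False
      interpret G0: gnam n a 0 by (rule gnam.intro) (use assms in auto)
      have cse0: "G0.dm * G0.dp = 2 * int n" using cse by (simp add: G0.dm_def G0.dp_def dm_def dp_def)
      obtain c :: "int \<times> int \<Rightarrow> int \<times> int \<Rightarrow> 'k" where
        c: "c \<in> cocycles2 (Gnam n a 0)" "c \<notin> coboundaries2 (Gnam n a 0)"
        using G0.exists_noncob[OF roots two cse0 dvd_0_right] by blast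
      obtain \<phi> where phi: "\<phi> \<in> iso (Gnam n a m) (Gnam n a 0)"
        using h by (auto simp: Gnam_split_def is_iso_def)
      have hyp: "\<And>\<beta>::'k. \<beta> ^ n = 1 \<Longrightarrow> \<beta> ^ Suc AA = 1 \<Longrightarrow> \<beta> ^ MM = 1 \<Longrightarrow> \<beta> ^ NN = 1"
        using triv_hyp False by blast
      have "c \<in> coboundaries2 (Gnam n a 0)"
        by (rule cob_transport[OF groupG G0.groupG phi all_cob_gen[OF roots hyp] c(1)])
      then show ?thesis using c(2) by blast
    qed
  qed
qed


end
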